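(* Let $(\mathcal{L},\mathcal{M},\hat{\mathcal{L}},\hat{\mathcal{M}})$ be a solution of the dDS hierarchy, i.e. the Lax-Sato equations $\frac{\partial K}{\partial t_{mn}}=\{H_{mn},K\}$ hold for $K\in\{\mathcal{L},\mathcal{M},\hat{\mathcal{L}},\hat{\mathcal{M}}\}$ and all $m+n\ge 1$, together with $\{\mathcal{L},\mathcal{M}\}=\{\hat{\mathcal{L}},\hat{\mathcal{M}}\}=1$. Then there exists a function $\tau_{dDS}(t)$ (the tau function) such that $$d\log\tau_{dDS}(t)=\sum_{m+n\ge 2}\big(v_{m+1}+\hat v_{n+1}\big)\,dt_{mn},$$ i.e. the 1-form on the right-hand side (in the variables $t_{mn}$, $m+n\ge 2$) is closed.
   Context: Variables: $t=(t_{mn})$ with $m,n\in\mathbb{N}=\{0,1,2,\dots\}$, $m+n\ge 1$, where $t_{10}\equiv z$ and $t_{01}\equiv\hat z$; $p$ is a complex parameter. Poisson bracket: $\{A,B\}=\frac{\partial A}{\partial p}\frac{\partial B}{\partial z}-\frac{\partial A}{\partial z}\frac{\partial B}{\partial p}$. $\mathcal{L}=p+\sum_{i\le 0}f_i(t)p^i$ and $\hat{\mathcal{L}}=\frac{u(t)}{p}+\sum_{i\ge 0}g_i(t)p^i$ are formal Laurent series in $p$ (coefficients depending on $t$). For a Laurent series, $(\cdot)_{>0}$ denotes the part with positive powers of $p$ and $(\cdot)_{\le 0}$ the part with non-positive powers. Hamiltonians: $H_{mn}=(\mathcal{L}^m)_{>0}+(\hat{\mathcal{L}}^n)_{\le 0}$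 (so $H_{m0}=(\mathcal{L}^m)_{>0}$, $H_{0n}=(\hat{\mathcal{L}}^n)_{\le 0}$). Orlov functions: $\mathcal{M}=\sum_{m+n\ge 2}m\,t_{mn}\mathcal{L}^{m-1}+z+\sum_{i=1}^{\infty}v_{i+1}\mathcal{L}^{-i-1}$, $\hat{\mathcal{M}}=\sum_{m+n\ge 2}n\,t_{mn}\hat{\mathcal{L}}^{n-1}+\hat z+\sum_{i=1}^{\infty}\hat v_{i+1}\hat{\mathcal{L}}^{-i-1}$, with coefficients $v_{i+1}(t),\hat v_{i+1}(t)$. Convention: $v_1=\hat v_1=0$ (there is no $\mathcal{L}^{-1}$, resp. $\hat{\mathcal{L}}^{-1}$, term). *)

theory Defs
  imports "HOL-Analysis.Analysis" "HOL-Computational_Algebra.Formal_Laurent_Series"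
begin

text \<open>A point of time space: t (m,n) = t_mn. The coordinate (0,0) is a dummy
  (it never occurs). z = t (1,0), zhat = t (0,1).
  We work on finitely supported times (only finitely many t_mn nonzero).\<close>

type_synonym times = "nat \<times> nat \<Rightarrow> complex"

definition Tdom :: "times set" where
  "Tdom = {t. finite {a. t a \<noteq> 0}}"

definition pd :: "nat \<times> nat \<Rightarrow> (times \<Rightarrow> complex) \<Rightarrow> times \<Rightarrow> complex" where
  "pd a f t = deriv (\<lambda>s. f (t(a := s))) (t a)"

definition pdifferentiable :: "(times \<Rightarrow> complex) \<Rightarrow> bool" where
  "pdifferentiable f \<longleftrightarrow>
     (\<forall>t\<in>Tdom. \<forall>a. (\<lambda>s. f (t(a := s))) field_differentiable (at (t a)))"

text \<open>Two representations are used: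
  * x-representation (for L, M): the fls variable X stands for p^{-1}, so a series
    with finitely many positive powers of p is a genuine fls in X;
    coefficient of p^k is the X-coefficient at index -k.
  * p-representation (for Lhat, Mhat): the fls variable X stands for p.\<close>

type_synonym tser = "times \<Rightarrow> complex fls"

definition dz :: "tser \<Rightarrow> times \<Rightarrow> complex fls" where
  "dz K t = Abs_fls (\<lambda>k. pd (1,0) (\<lambda>s. fls_nth (K s) k) t)"

text \<open>d/dp in x-representation (X = 1/p): d/dp = - X^2 d/dX.\<close>
definition dpx :: "complex fls \<Rightarrow> complex fls" where
  "dpx F = - (fls_X ^ 2 * fls_deriv F)"

definition PBx :: "tser \<Rightarrow> tser \<Rightarrow> times \<Rightarrow> complex fls" where
  "PBx A B t = dpx (A t) * dz B t - dz A t * dpx (B t)"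

definition PBp :: "tser \<Rightarrow> tser \<Rightarrow> times \<Rightarrow> complex fls" where
  "PBp A B t = fls_deriv (A t) * dz B t - dz A t * fls_deriv (B t)"

text \<open>Coefficient of p^k in H_mn = (L^m)_{>0} + (Lhat^n)_{<=0};
  Lx is L in x-representation, Lh is Lhat in p-representation.\<close>
definition Hcoef :: "tser \<Rightarrow> tser \<Rightarrow> nat \<times> nat \<Rightarrow> times \<Rightarrow> int \<Rightarrow> complex" where
  "Hcoef Lx Lh a t k =
     (if 0 < k then fls_nth (Lx t ^ fst a) (- k) else 0) +
     (if k \<le> 0 then fls_nth (Lh t ^ snd a) k else 0)"

definition Hx :: "tser \<Rightarrow> tser \<Rightarrow> nat \<times> nat \<Rightarrow> tser" where
  "Hx Lx Lh a t = Abs_fls (\<lambda>k. Hcoef Lx Lh a t (- k))"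

definition Hp :: "tser \<Rightarrow> tser \<Rightarrow> nat \<times> nat \<Rightarrow> tser" where
  "Hp Lx Lh a t = Abs_fls (\<lambda>k. Hcoef Lx Lh a t k)"

text \<open>The last sum is well defined since L^{-i-1} has subdegree i+1, so the coefficient
  at index k only receives contributions from 1 <= i < k.\<close>
definition Orlov :: "(nat \<times> nat \<Rightarrow> nat) \<Rightarrow> nat \<times> nat \<Rightarrow> tser \<Rightarrow> (nat \<Rightarrow> times \<Rightarrow> complex) \<Rightarrow> tser" where
  "Orlov sel c L w t =
     (\<Sum>a\<in>{a. 2 \<le> fst a + snd a \<and> t a \<noteq> 0}.
         fls_const (of_nat (sel a) * t a) * (L t) ^ (sel a - 1))
     + fls_const (t c)
     + Abs_fls (\<lambda>k. \<Sum>i\<in>{1..<nat k}. w (i+1) t * fls_nth (inverse ((L t) ^ (i+1))) k)"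

definition Mx :: "tser \<Rightarrow> (nat \<Rightarrow> times \<Rightarrow> complex) \<Rightarrow> tser" where
  "Mx L v = Orlov fst (1,0) L v"

definition Mp :: "tser \<Rightarrow> (nat \<Rightarrow> times \<Rightarrow> complex) \<Rightarrow> tser" where
  "Mp Lh vh = Orlov snd (0,1) Lh vh"

definition vconv :: "(nat \<Rightarrow> times \<Rightarrow> complex) \<Rightarrow> nat \<Rightarrow> times \<Rightarrow> complex" where
  "vconv w j = (if j = 1 then (\<lambda>_. 0) else w j)"

definition omega :: "(nat \<Rightarrow> times \<Rightarrow> complex) \<Rightarrow> (nat \<Rightarrow> times \<Rightarrow> complex) \<Rightarrow> nat \<times> nat \<Rightarrow> times \<Rightarrow> complex" where
  "omega v vh a t = vconv v (fst a + 1) t + vconv vh (snd a + 1) t"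

end

theory Submission
  imports Defs
begin


notation fls_nth (infixl \<open>$$\<close> 75)

definition lb :: "int \<Rightarrow> complex fls \<Rightarrow> bool" where
  "lb N F \<longleftrightarrow> (\<forall>k<N. F $$ k = 0)"

lemma lbD: "lb N F \<Longrightarrow> k < N \<Longrightarrow> F $$ k = 0" by (simp add: lb_def)

lemma lb_mono: "lb N F \<Longrightarrow> M \<le> N \<Longrightarrow> lb M F" by (simp add: lb_def)

lemma times_nth_lb:
  assumes "lb NA F" "lb NB G"
  shows "(F*G) $$ n = (\<Sum>i=NA..n-NB. F$$i * G$$(n-i))"
proof (cases "F = 0 \<or> G = 0")
  case True then show ?thesis by auto
next
  case False
  hence F: "F \<noteq> 0" and G: "G \<noteq> 0" by auto
  have dF: "NA \<le> fls_subdegree F"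
    using assms(1) F by (metis lb_def linorder_not_less nth_fls_subdegree_nonzero)
  have dG: "NB \<le> fls_subdegree G"
    using assms(2) G by (metis lb_def linorder_not_less nth_fls_subdegree_nonzero)
  have "(F*G) $$ n = (\<Sum>i=fls_subdegree F..n - fls_subdegree G. F $$ i * G $$ (n - i))"
    by (rule fls_times_nth(2))
  also have "\<dots> = (\<Sum>i=NA..n-NB. F$$i * G$$(n-i))"
  proof (rule sum.mono_neutral_left)
    show "finite {NA..n - NB}" by simp
    show "{fls_subdegree F..n - fls_subdegree G} \<subseteq> {NA..n - NB}" using dF dG by auto
    show "\<forall>i\<in>{NA..n - NB} - {fls_subdegree F..n - fls_subdegree G}. F $$ i * G $$ (n - i) = 0"
    proof
      fix i assume i: "i \<in> {NA..n - NB} - {fls_subdegree F..n - fls_subdegree G}"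
      show "F $$ i * G $$ (n - i) = 0"
      proof (cases "i < fls_subdegree F")
        case True then show ?thesis by simp
      next
        case False
        with i have "n - i < fls_subdegree G" by auto
        then show ?thesis by simp
      qed
    qed
  qed
  finally show ?thesis .
qed

lemma lb_mult: "lb N F \<Longrightarrow> lb M G \<Longrightarrow> lb (N+M) (F*G)"
  unfolding lb_def[of "N+M"] by (auto simp: times_nth_lb)

lemma lb_add: "lb N F \<Longrightarrow> lb N G \<Longrightarrow> lb N (F+G)" by (simp add: lb_def)
lemma lb_diff: "lb N F \<Longrightarrow> lb N G \<Longrightarrow> lb N (F-G)" by (simp add: lb_def)
lemma lb_uminus: "lb N F \<Longrightarrow> lb N (-F)" by (simp add: lb_def)
lemma lb_sum: "(\<And>i. i\<in>I \<Longrightarrow> lb N (f i)) \<Longrightarrow> lb N (\<Sum>i\<in>I. f i)"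
  by (simp add: lb_def fls_nth_sum)
lemma lb_const: "lb 0 (fls_const c)" by (simp add: lb_def)
lemma lb_one: "lb 0 1" by (simp add: lb_def)
lemma lb_zero: "lb N 0" by (simp add: lb_def)
lemma lb_power: "lb N F \<Longrightarrow> lb (int k * N) (F ^ k)"
proof (induction k)
  case 0 then show ?case by (simp add: lb_one)
next
  case (Suc k)
  then have "lb (N + int k * N) (F * F^k)" by (intro lb_mult) auto
  then show ?case by (simp add: algebra_simps)
qed
lemma lb_cmult: "lb N F \<Longrightarrow> lb N (fls_const c * F)" by (simp add: lb_def)

lemma lb_inverse:
  assumes "F $$ (-1) \<noteq> 0" "lb (-1) F"
  shows "lb 1 (inverse F)"
proof -
  have "fls_subdegree F = -1"
    using assms by (intro fls_subdegree_eqI) (auto simp: lb_def)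
  then have "fls_subdegree (inverse F) = 1" by simp
  then show ?thesis by (simp add: lb_def)
qed

lemma dpx_nth: "dpx F $$ k = - (of_int (k - 1) * F $$ (k - 1))"
  by (simp add: dpx_def fls_X_power_times_conv_shift)

lemma lb_dpx: "lb N F \<Longrightarrow> lb (N+1) (dpx F)" by (simp add: lb_def dpx_nth)
lemma lb_deriv: "lb N F \<Longrightarrow> lb (N - 1) (fls_deriv F)" by (simp add: lb_def)



definition gdl :: "nat\<times>nat \<Rightarrow> times \<Rightarrow> tser \<Rightarrow> bool" where
  "gdl a t K \<longleftrightarrow> (\<exists>N. \<forall>s. lb N (K (t(a:=s))))"

definition gd :: "nat\<times>nat \<Rightarrow> times \<Rightarrow> tser \<Rightarrow> bool" where
  "gd a t K \<longleftrightarrow> (\<forall>k. (\<lambda>s. K (t(a:=s)) $$ k) field_differentiable (at (t a))) \<and> gdl a t K"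

definition Dd :: "nat\<times>nat \<Rightarrow> tser \<Rightarrow> times \<Rightarrow> complex fls" where
  "Dd a K t = Abs_fls (\<lambda>k. deriv (\<lambda>s. K (t(a:=s)) $$ k) (t a))"

lemma dz_Dd: "dz K t = Dd (1,0) K t"
  by (simp add: dz_def Dd_def pd_def)

lemma Dd_nth_lb:
  assumes "\<forall>s. lb N (K (t(a:=s)))"
  shows "Dd a K t $$ k = deriv (\<lambda>s. K (t(a:=s)) $$ k) (t a)"
  unfolding Dd_def
proof (rule nth_Abs_fls_lower_bound)
  show "\<forall>n<N. deriv (\<lambda>s. K (t(a := s)) $$ n) (t a) = 0"
  proof (intro allI impI)
    fix n assume "n < N"
    then have "(\<lambda>s. K (t(a := s)) $$ n) = (\<lambda>s. 0)" using assms by (auto simp: lb_def)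
    then show "deriv (\<lambda>s. K (t(a := s)) $$ n) (t a) = 0" by simp
  qed
qed

lemma Dd_nth: "gdl a t K \<Longrightarrow> Dd a K t $$ k = deriv (\<lambda>s. K (t(a:=s)) $$ k) (t a)"
  unfolding gdl_def using Dd_nth_lb by blast

lemma Dd_lb: "\<forall>s. lb N (K (t(a:=s))) \<Longrightarrow> lb N (Dd a K t)"
  using Dd_nth_lb by (simp add: lb_def)

lemma gd_lb: "gd a t K \<Longrightarrow> gdl a t K" by (simp add: gd_def)

lemma gdl_at: "gdl a t K \<Longrightarrow> \<exists>N. \<forall>s. lb N (K (t(a:=s)))" by (simp add: gdl_def)

lemma Dd_cong: "(\<And>s. K1 (t(a:=s)) = K2 (t(a:=s))) \<Longrightarrow> Dd a K1 t = Dd a K2 t"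
  by (simp add: Dd_def)

lemma gd_diff: "gd a t K \<Longrightarrow> ((\<lambda>s. K (t(a:=s)) $$ k) has_field_derivative
   deriv (\<lambda>s. K (t(a:=s)) $$ k) (t a)) (at (t a))"
  by (simp add: gd_def DERIV_deriv_iff_field_differentiable)

lemma gdl_mult: "gdl a t A \<Longrightarrow> gdl a t B \<Longrightarrow> gdl a t (\<lambda>s. A s * B s)"
  unfolding gdl_def by (meson lb_mult)

lemma gdl_add: "gdl a t A \<Longrightarrow> gdl a t B \<Longrightarrow> gdl a t (\<lambda>s. A s + B s)"
  unfolding gdl_def by (metis lb_add lb_mono min.cobounded1 min.cobounded2)

lemma Dd_mult:
  assumes A: "gd a t A" and B: "gd a t B"
  shows "Dd a (\<lambda>s. A s * B s) t = Dd a A t * B t + A t * Dd a B t"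
proof -
  obtain NA where NA: "\<forall>s. lb NA (A (t(a:=s)))" using A by (auto simp: gd_def gdl_def)
  obtain NB where NB: "\<forall>s. lb NB (B (t(a:=s)))" using B by (auto simp: gd_def gdl_def)
  have tt: "t(a := t a) = t" by simp
  have lA: "lb NA (A t)" using NA[rule_format, of "t a"] tt by simp
  have lB: "lb NB (B t)" using NB[rule_format, of "t a"] tt by simp
  have lDA: "lb NA (Dd a A t)" by (rule Dd_lb[OF NA])
  have lDB: "lb NB (Dd a B t)" by (rule Dd_lb[OF NB])
  show ?thesis
  proof (rule fls_eqI)
    fix n
    have eq: "(\<lambda>s. (A (t(a:=s)) * B (t(a:=s))) $$ n) =
        (\<lambda>s. \<Sum>i=NA..n-NB. A (t(a:=s)) $$ i * B (t(a:=s)) $$ (n-i))"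
      by (intro ext times_nth_lb) (use NA NB in auto)
    have der: "((\<lambda>s. \<Sum>i=NA..n-NB. A (t(a:=s)) $$ i * B (t(a:=s)) $$ (n-i)) has_field_derivative
        (\<Sum>i=NA..n-NB. deriv (\<lambda>s. A (t(a:=s)) $$ i) (t a) * B t $$ (n-i)
           + A t $$ i * deriv (\<lambda>s. B (t(a:=s)) $$ (n-i)) (t a))) (at (t a))"
    proof (rule DERIV_sum)
      fix i
      show "((\<lambda>s. A (t(a:=s)) $$ i * B (t(a:=s)) $$ (n-i)) has_field_derivative
        (deriv (\<lambda>s. A (t(a:=s)) $$ i) (t a) * B t $$ (n-i)
           + A t $$ i * deriv (\<lambda>s. B (t(a:=s)) $$ (n-i)) (t a))) (at (t a))"
        by (rule DERIV_cong[OF DERIV_mult[OF gd_diff[OF A] gd_diff[OF B]]]) (simp add: algebra_simps)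
    qed
    have "Dd a (\<lambda>s. A s * B s) t $$ n = deriv (\<lambda>s. (A (t(a:=s)) * B (t(a:=s))) $$ n) (t a)"
      by (rule Dd_nth) (intro gdl_mult gd_lb A B)
    also have "\<dots> = (\<Sum>i=NA..n-NB. deriv (\<lambda>s. A (t(a:=s)) $$ i) (t a) * B t $$ (n-i)
           + A t $$ i * deriv (\<lambda>s. B (t(a:=s)) $$ (n-i)) (t a))"
      unfolding eq by (rule DERIV_imp_deriv[OF der])
    also have "\<dots> = (Dd a A t * B t) $$ n + (A t * Dd a B t) $$ n"
      by (simp add: times_nth_lb[OF lDA lB] times_nth_lb[OF lA lDB] sum.distrib
            Dd_nth[OF gd_lb[OF A]] Dd_nth[OF gd_lb[OF B]])
    finally show "Dd a (\<lambda>s. A s * B s) t $$ n = (Dd a A t * B t + A t * Dd a B t) $$ n" by simp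
  qed
qed

lemma gd_mult: assumes A: "gd a t A" and B: "gd a t B" shows "gd a t (\<lambda>s. A s * B s)"
proof -
  obtain NA where NA: "\<forall>s. lb NA (A (t(a:=s)))" using A by (auto simp: gd_def gdl_def)
  obtain NB where NB: "\<forall>s. lb NB (B (t(a:=s)))" using B by (auto simp: gd_def gdl_def)
  have "(\<lambda>s. (A (t(a:=s)) * B (t(a:=s))) $$ n) field_differentiable at (t a)" for n
  proof -
    have eq: "(\<lambda>s. (A (t(a:=s)) * B (t(a:=s))) $$ n) =
        (\<lambda>s. \<Sum>i=NA..n-NB. A (t(a:=s)) $$ i * B (t(a:=s)) $$ (n-i))"
      by (intro ext times_nth_lb) (use NA NB in auto)
    show ?thesis unfolding eq
      by (intro field_differentiable_sum field_differentiable_mult)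
         (use A B in \<open>auto simp: gd_def\<close>)
  qed
  then show ?thesis using gdl_mult A B by (simp add: gd_def)
qed

lemma Dd_add:
  assumes A: "gdl a t A" and B: "gdl a t B"
    and dA: "\<forall>k. (\<lambda>s. A (t(a:=s)) $$ k) field_differentiable (at (t a))"
    and dB: "\<forall>k. (\<lambda>s. B (t(a:=s)) $$ k) field_differentiable (at (t a))"
  shows "Dd a (\<lambda>s. A s + B s) t = Dd a A t + Dd a B t"
proof (rule fls_eqI)
  fix n
  have "Dd a (\<lambda>s. A s + B s) t $$ n = deriv (\<lambda>s. A (t(a:=s)) $$ n + B (t(a:=s)) $$ n) (t a)"
    using Dd_nth[OF gdl_add[OF A B]] by simp
  also have "\<dots> = deriv (\<lambda>s. A (t(a:=s)) $$ n) (t a) + deriv (\<lambda>s. B (t(a:=s)) $$ n) (t a)"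
    by (rule deriv_add) (use dA dB in auto)
  finally show "Dd a (\<lambda>s. A s + B s) t $$ n = (Dd a A t + Dd a B t) $$ n"
    by (simp add: Dd_nth[OF A] Dd_nth[OF B])
qed

lemma gd_add: "gd a t A \<Longrightarrow> gd a t B \<Longrightarrow> gd a t (\<lambda>s. A s + B s)"
  unfolding gd_def by (auto intro: field_differentiable_add gdl_add)

lemma Dd_add': "gd a t A \<Longrightarrow> gd a t B \<Longrightarrow> Dd a (\<lambda>s. A s + B s) t = Dd a A t + Dd a B t"
  by (rule Dd_add) (auto simp: gd_def)

lemma gd_sum: "finite I \<Longrightarrow> (\<And>i. i \<in> I \<Longrightarrow> gd a t (f i)) \<Longrightarrow> gd a t (\<lambda>s. \<Sum>i\<in>I. f i s)"
proof (induction I rule: finite_induct)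
  case empty
  then show ?case by (simp add: gd_def gdl_def lb_def)
next
  case (insert x F)
  then show ?case by (simp add: gd_add)
qed

lemma Dd_sum: "finite I \<Longrightarrow> (\<And>i. i \<in> I \<Longrightarrow> gd a t (f i)) \<Longrightarrow>
   Dd a (\<lambda>s. \<Sum>i\<in>I. f i s) t = (\<Sum>i\<in>I. Dd a (f i) t)"
proof (induction I rule: finite_induct)
  case empty
  have "Abs_fls (\<lambda>k. 0::complex) = 0"
    by (rule fls_eqI) (simp add: nth_Abs_fls_lower_bound[of 0])
  then show ?case by (simp add: Dd_def)
next
  case (insert x F)
  then have "Dd a (\<lambda>s. f x s + (\<Sum>i\<in>F. f i s)) t = Dd a (f x) t + Dd a (\<lambda>s. \<Sum>i\<in>F. f i s) t"
    by (intro Dd_add' gd_sum) auto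
  then show ?case using insert by simp
qed

lemma Dd_const: "Dd a (\<lambda>s. fls_const (g s)) t = fls_const (deriv (\<lambda>s. g (t(a:=s))) (t a))"
proof (rule fls_eqI)
  fix n
  have l: "\<forall>s. lb 0 (fls_const (g (t(a:=s))))" by (simp add: lb_const)
  show "Dd a (\<lambda>s. fls_const (g s)) t $$ n = fls_const (deriv (\<lambda>s. g (t(a:=s))) (t a)) $$ n"
  proof (cases "n = 0")
    case True
    have h2: "(\<lambda>s. fls_const (g (t(a:=s))) $$ n) = (\<lambda>s. g (t(a:=s)))" using True by simp
    have h1: "Dd a (\<lambda>s. fls_const (g s)) t $$ n = deriv (\<lambda>s. fls_const (g (t(a:=s))) $$ n) (t a)"
      by (rule Dd_nth_lb[OF l])
    have h3: "fls_const (deriv (\<lambda>s. g (t(a:=s))) (t a)) $$ n = deriv (\<lambda>s. g (t(a:=s))) (t a)"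
      by (simp only: True fls_const_nth if_True refl)
    show ?thesis unfolding h3 h1 h2 ..
  next
    case False
    have "(\<lambda>s. fls_const (g (t(a:=s))) $$ n) = (\<lambda>s. 0)" using False by simp
    then show ?thesis using Dd_nth_lb[OF l, of n] False by simp
  qed
qed

lemma gd_const: assumes "(\<lambda>s. g (t(a:=s))) field_differentiable (at (t a))"
  shows "gd a t (\<lambda>s. fls_const (g s))"
proof -
  have "(\<lambda>s. fls_const (g (t(a:=s))) $$ k) field_differentiable (at (t a))" for k
  proof (cases "k = 0")
    case True
    have "(\<lambda>s. fls_const (g (t(a:=s))) $$ k) = (\<lambda>s. g (t(a:=s)))" using True by simp
    then show ?thesis using assms by simp
  next
    case False
    have "(\<lambda>s. fls_const (g (t(a:=s))) $$ k) = (\<lambda>s. 0)" using False by simp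
    then show ?thesis by simp
  qed
  then show ?thesis unfolding gd_def gdl_def by (auto intro!: exI[of _ 0] simp: lb_const)
qed

lemma gd_constc: "gd a t (\<lambda>s. fls_const c)"
  unfolding gd_def gdl_def by (auto intro!: exI[of _ 0] simp: lb_const)

lemma gd_power: "gd a t A \<Longrightarrow> gd a t (\<lambda>s. A s ^ n)"
proof (induction n)
  case 0
  then show ?case using gd_constc[of a t 1] by simp
next
  case (Suc n)
  then show ?case using gd_mult[of a t A "\<lambda>s. A s ^ n"] by simp
qed

lemma gd_cong: "gd a t K1 \<Longrightarrow> (\<And>s. K1 (t(a:=s)) = K2 (t(a:=s))) \<Longrightarrow> gd a t K2"
  unfolding gd_def gdl_def by simp



lemma gd_inverse:
  assumes L: "gd a t L" and Ls: "\<forall>s. L (t(a:=s)) $$ (-1) \<noteq> 0 \<and> lb (-1) (L (t(a:=s)))"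
  shows "gd a t (\<lambda>s. inverse (L s))"
proof -
  define I where "I s = inverse (L (t(a:=s)))" for s
  define l where "l s = L (t(a:=s))" for s
  have lI: "lb 1 (I s)" for s unfolding I_def using Ls lb_inverse by blast
  have ll: "lb (-1) (l s)" for s using Ls l_def by auto
  have l0: "l s $$ (-1) \<noteq> 0" for s using Ls l_def by auto
  have prod: "l s * I s = 1" for s
  proof -
    have "l s \<noteq> 0" using l0[of s] by (metis fls_nonzeroI)
    then show ?thesis by (simp add: I_def l_def)
  qed
  have rec: "I s $$ (int n + 1) = ((if n = 0 then 1 else 0) - (\<Sum>i=0..int n - 1. l s $$ i * I s $$ (int n - i))) / l s $$ (-1)" for s n
  proof -
    have "(l s * I s) $$ int n = (\<Sum>i=-1..int n - 1. l s $$ i * I s $$ (int n - i))"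
      by (rule times_nth_lb[OF ll lI])
    also have "\<dots> = l s $$ (-1) * I s $$ (int n + 1) + (\<Sum>i=0..int n - 1. l s $$ i * I s $$ (int n - i))"
    proof -
      have "{-1..int n - 1} = insert (-1) {0..int n - 1}" by auto
      then show ?thesis by simp
    qed
    finally have "l s $$ (-1) * I s $$ (int n + 1) + (\<Sum>i=0..int n - 1. l s $$ i * I s $$ (int n - i))
        = (if n = 0 then 1 else 0)" using prod[of s] by simp
    then show ?thesis using l0[of s] by (simp add: field_simps)
  qed
  have dl: "(\<lambda>s. l s $$ k) field_differentiable at (t a)" for k
    using L by (simp add: gd_def l_def)
  have main: "\<forall>k. k \<le> int m \<longrightarrow> (\<lambda>s. I s $$ k) field_differentiable at (t a)" for m
  proof (induction m)
    case 0
    have "(\<lambda>s. I s $$ k) = (\<lambda>s. 0)" if "k \<le> 0" for k using lI that by (auto simp: lb_def)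
    then show ?case by simp
  next
    case (Suc m)
    show ?case
    proof (intro allI impI)
      fix k assume k: "k \<le> int (Suc m)"
      show "(\<lambda>s. I s $$ k) field_differentiable at (t a)"
      proof (cases "k \<le> int m")
        case True then show ?thesis using Suc by auto
      next
        case False
        then have kk: "k = int m + 1" using k by auto
        have eq: "(\<lambda>s. I s $$ k) = (\<lambda>s. ((if m = 0 then 1 else 0) - (\<Sum>i=0..int m - 1. l s $$ i * I s $$ (int m - i))) / l s $$ (-1))"
          using rec kk by auto
        have "(\<lambda>s. I s $$ (int m - i)) field_differentiable at (t a)" if "i \<in> {0..int m - 1}" for i
          using Suc that by auto
        then show ?thesis unfolding eq
          by (intro field_differentiable_divide field_differentiable_diff field_differentiable_sum
              field_differentiable_mult dl) (auto simp: l0)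
      qed
    qed
  qed
  have "(\<lambda>s. I s $$ k) field_differentiable at (t a)" for k
    using main[of "nat k"] by (cases "k \<le> 0") auto
  moreover have "gdl a t (\<lambda>s. inverse (L s))"
    unfolding gdl_def using lI I_def by auto
  ultimately show ?thesis by (simp add: gd_def I_def)
qed



definition der :: "(complex fls \<Rightarrow> complex fls) \<Rightarrow> bool" where
  "der P \<longleftrightarrow> (\<forall>x y. P (x*y) = P x * y + x * P y) \<and> (\<forall>x y. P (x+y) = P x + P y) \<and> (\<forall>c. P (fls_const c) = 0)"

lemma der_mult: "der P \<Longrightarrow> P (x*y) = P x * y + x * P y" by (simp add: der_def)
lemma der_add: "der P \<Longrightarrow> P (x+y) = P x + P y" by (simp add: der_def)
lemma der_const: "der P \<Longrightarrow> P (fls_const c) = 0" by (simp add: der_def)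
lemma der_one: "der P \<Longrightarrow> P 1 = 0" using der_const[of P 1] by (simp add: fls_const_1)
lemma der_zero: "der P \<Longrightarrow> P 0 = 0" using der_const[of P 0] by simp
lemma der_uminus: "der P \<Longrightarrow> P (-x) = - P x"
  using der_add[of P x "-x"] der_zero[of P] by (simp add: eq_neg_iff_add_eq_0 add.commute)
lemma der_diff: "der P \<Longrightarrow> P (x-y) = P x - P y"
  using der_add[of P x "-y"] der_uminus[of P y] by simp
lemma der_sum: "der P \<Longrightarrow> P (\<Sum>i\<in>I. f i) = (\<Sum>i\<in>I. P (f i))"
  by (induction I rule: infinite_finite_induct) (auto simp: der_zero der_add)
lemma der_cmult: "der P \<Longrightarrow> P (fls_const c * x) = fls_const c * P x"
  by (simp add: der_mult der_const)
lemma der_power: "der P \<Longrightarrow> P (x ^ Suc n) = of_nat (Suc n) * x ^ n * P x"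
proof (induction n)
  case 0 then show ?case by (simp add: der_mult der_one)
next
  case (Suc n)
  have "P (x ^ Suc (Suc n)) = P (x * x ^ Suc n)" by simp
  also have "\<dots> = P x * x ^ Suc n + x * (of_nat (Suc n) * x ^ n * P x)"
    using Suc by (simp add: der_mult)
  also have "\<dots> = of_nat (Suc (Suc n)) * x ^ Suc n * P x" by (simp add: algebra_simps)
  finally show ?case .
qed
lemma der_inverse: assumes "der P" "x \<noteq> 0" shows "P (inverse x) = - (inverse x * inverse x) * P x"
proof -
  have "0 = P (x * inverse x)" using assms by (simp add: der_one)
  also have "\<dots> = P x * inverse x + x * P (inverse x)" using assms(1) by (rule der_mult)
  finally have "x * P (inverse x) = - P x * inverse x" by (simp add: eq_neg_iff_add_eq_0 add.commute)
  then have "P (inverse x) = inverse x * (- P x * inverse x)" using assms(2)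
    by (metis (no_types) mult.assoc mult.left_commute mult.right_neutral right_inverse)
  then show ?thesis by (simp add: algebra_simps)
qed

definition gd2 :: "nat\<times>nat \<Rightarrow> times \<Rightarrow> tser \<Rightarrow> bool" where
  "gd2 b t K \<longleftrightarrow> gd b t K \<and> gd (1,0) t K"

definition Om :: "nat\<times>nat \<Rightarrow> times \<Rightarrow> complex fls \<Rightarrow> complex fls \<Rightarrow> complex fls \<Rightarrow>
   (complex fls \<Rightarrow> complex fls) \<Rightarrow> tser \<Rightarrow> complex fls" where
  "Om b t \<alpha> \<beta> \<gamma> P K = \<alpha> * Dd b K t + \<beta> * Dd (1,0) K t + \<gamma> * P (K t)"

lemma gd2_mult: "gd2 b t A \<Longrightarrow> gd2 b t B \<Longrightarrow> gd2 b t (\<lambda>s. A s * B s)"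
  by (simp add: gd2_def gd_mult)
lemma gd2_add: "gd2 b t A \<Longrightarrow> gd2 b t B \<Longrightarrow> gd2 b t (\<lambda>s. A s + B s)"
  by (simp add: gd2_def gd_add)
lemma gd2_sum: "finite I \<Longrightarrow> (\<And>i. i \<in> I \<Longrightarrow> gd2 b t (f i)) \<Longrightarrow> gd2 b t (\<lambda>s. \<Sum>i\<in>I. f i s)"
  by (simp add: gd2_def gd_sum)
lemma gd2_power: "gd2 b t A \<Longrightarrow> gd2 b t (\<lambda>s. A s ^ n)"
  by (simp add: gd2_def gd_power)
lemma gd2_constc: "gd2 b t (\<lambda>s. fls_const c)"
  by (simp add: gd2_def gd_constc)

lemma Om_mult: "der P \<Longrightarrow> gd2 b t A \<Longrightarrow> gd2 b t B \<Longrightarrow>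
  Om b t \<alpha> \<beta> \<gamma> P (\<lambda>s. A s * B s) = Om b t \<alpha> \<beta> \<gamma> P A * B t + A t * Om b t \<alpha> \<beta> \<gamma> P B"
  unfolding Om_def gd2_def by (simp add: Dd_mult der_mult algebra_simps)

lemma Om_add: "der P \<Longrightarrow> gd2 b t A \<Longrightarrow> gd2 b t B \<Longrightarrow>
  Om b t \<alpha> \<beta> \<gamma> P (\<lambda>s. A s + B s) = Om b t \<alpha> \<beta> \<gamma> P A + Om b t \<alpha> \<beta> \<gamma> P B"
  unfolding Om_def gd2_def by (simp add: Dd_add' der_add algebra_simps)

lemma Om_sum: "der P \<Longrightarrow> finite I \<Longrightarrow> (\<And>i. i \<in> I \<Longrightarrow> gd2 b t (f i)) \<Longrightarrow>
  Om b t \<alpha> \<beta> \<gamma> P (\<lambda>s. \<Sum>i\<in>I. f i s) = (\<Sum>i\<in>I. Om b t \<alpha> \<beta> \<gamma> P (f i))"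
  unfolding Om_def gd2_def by (simp add: Dd_sum der_sum sum_distrib_left sum.distrib)

lemma Om_const: "der P \<Longrightarrow> Om b t \<alpha> \<beta> \<gamma> P (\<lambda>s. fls_const (g s)) =
   \<alpha> * fls_const (deriv (\<lambda>s. g (t(b:=s))) (t b)) + \<beta> * fls_const (deriv (\<lambda>s. g (t((1,0):=s))) (t (1,0)))"
  unfolding Om_def by (simp add: Dd_const der_const)

lemma Om_cong: "(\<And>s. K1 (t(b:=s)) = K2 (t(b:=s))) \<Longrightarrow> (\<And>s. K1 (t((1,0):=s)) = K2 (t((1,0):=s))) \<Longrightarrow>
  Om b t \<alpha> \<beta> \<gamma> P K1 = Om b t \<alpha> \<beta> \<gamma> P K2"
proof -
  assume h1: "\<And>s. K1 (t(b:=s)) = K2 (t(b:=s))" and h2: "\<And>s. K1 (t((1,0):=s)) = K2 (t((1,0):=s))"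
  have "K1 t = K2 t" using h1[of "t b"] by simp
  then show ?thesis unfolding Om_def using Dd_cong[of K1 t b K2, OF h1] Dd_cong[of K1 t "(1,0)" K2, OF h2] by simp
qed

lemma Om_power: assumes "der P" "gd2 b t L" "Om b t \<alpha> \<beta> \<gamma> P L = 0"
  shows "Om b t \<alpha> \<beta> \<gamma> P (\<lambda>s. L s ^ n) = 0"
proof (induction n)
  case 0
  have "Om b t \<alpha> \<beta> \<gamma> P (\<lambda>s. fls_const 1) = 0" using Om_const[OF assms(1), of b t \<alpha> \<beta> \<gamma> "\<lambda>s. 1"] by simp
  then show ?case by (simp add: fls_const_1)
next
  case (Suc n)
  have "Om b t \<alpha> \<beta> \<gamma> P (\<lambda>s. L s * L s ^ n) = 0"
    using Om_mult[OF assms(1,2) gd2_power[OF assms(2)]] Suc assms(3) by simp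
  then show ?case by simp
qed

lemma Om_inverse: assumes P: "der P" and L: "gd2 b t L" "gd2 b t (\<lambda>s. inverse (L s))"
  and O: "Om b t \<alpha> \<beta> \<gamma> P L = 0"
  and nz: "\<forall>s. L (t(b:=s)) \<noteq> 0" "\<forall>s. L (t((1,0):=s)) \<noteq> 0"
  shows "Om b t \<alpha> \<beta> \<gamma> P (\<lambda>s. inverse (L s)) = 0"
proof -
  have Lt: "L t \<noteq> 0" using nz(1)[rule_format, of "t b"] by simp
  have "Om b t \<alpha> \<beta> \<gamma> P (\<lambda>s. L s * inverse (L s)) = Om b t \<alpha> \<beta> \<gamma> P (\<lambda>s. fls_const 1)"
    by (rule Om_cong) (use nz in \<open>auto simp: fls_const_1\<close>)
  also have "\<dots> = 0" using Om_const[OF P, of b t \<alpha> \<beta> \<gamma> "\<lambda>s. 1"] by simp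
  finally have "L t * Om b t \<alpha> \<beta> \<gamma> P (\<lambda>s. inverse (L s)) = 0"
    using Om_mult[OF P L] O by simp
  then show ?thesis using Lt by simp
qed



lemma R_pow: assumes "der P" "\<forall>F. P F $$ r = 0" shows "(x ^ k * P x) $$ r = 0"
proof -
  have "P (x ^ Suc k) = fls_const (of_nat (Suc k)) * (x ^ k * P x)"
    using der_power[OF assms(1), of x k] by (simp only: fls_of_nat mult.assoc)
  then have "(fls_const (of_nat (Suc k)) * (x ^ k * P x)) $$ r = 0" using assms(2)
    by metis
  then have "of_nat (Suc k) * (x ^ k * P x) $$ r = 0" by (simp only: fls_mult_const_nth)
  then show ?thesis by (metis mult_eq_0_iff of_nat_neq_0)
qed

lemma R_invpow: assumes "der P" "\<forall>F. P F $$ r = 0" "x \<noteq> 0" "2 \<le> m"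
  shows "(inverse x ^ m * P x) $$ r = 0"
proof -
  obtain k where m: "m = Suc (Suc k)" using assms(4) by (metis add_2_eq_Suc le_Suc_ex)
  have "P (inverse x ^ Suc k) = of_nat (Suc k) * inverse x ^ k * P (inverse x)"
    using der_power[OF assms(1)] by blast
  also have "\<dots> = - (fls_const (of_nat (Suc k)) * (inverse x ^ m * P x))"
    using der_inverse[OF assms(1,3)] by (simp only: fls_of_nat m) (simp add: algebra_simps)
  finally have "(- (fls_const (of_nat (Suc k)) * (inverse x ^ m * P x))) $$ r = 0"
    using assms(2) by metis
  then have "of_nat (Suc k) * (inverse x ^ m * P x) $$ r = 0"
    by (simp only: fls_uminus_nth fls_mult_const_nth neg_equal_0_iff_equal)
  then show ?thesis by (metis mult_eq_0_iff of_nat_neq_0)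
qed

lemma invpow_pow: fixes x :: "complex fls" assumes "x \<noteq> 0"
  shows "inverse x ^ (i+1) * x ^ j =
    (if i < j then x ^ (j - i - 1) else inverse x ^ (i + 1 - j))"
proof (cases "i < j")
  case True
  then have "x ^ j = x ^ (i+1) * x ^ (j - i - 1)"
    using power_add[of x "i+1" "j-i-1"] by simp
  moreover have "inverse x ^ (i+1) * x ^ (i+1) = 1"
    by (metis assms left_inverse power_mult_distrib power_one)
  ultimately show ?thesis using True by (simp only: mult.assoc[symmetric] if_True) simp
next
  case False
  then have "inverse x ^ (i+1) = inverse x ^ (i + 1 - j) * inverse x ^ j"
    using power_add[of "inverse x" "i+1-j" j] by simp
  moreover have "inverse x ^ j * x ^ j = 1"
    by (metis assms left_inverse power_mult_distrib power_one)
  ultimately show ?thesis using False by (simp add: mult.assoc)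
qed

lemma lb_eqlow_Dd:
  assumes "gdl a t K1" "gdl a t K2" "\<forall>s. lb N (K1 (t(a:=s)) - K2 (t(a:=s)))"
  shows "lb N (Dd a K1 t - Dd a K2 t)"
  unfolding lb_def
proof (intro allI impI)
  fix k assume k: "k < N"
  have "(\<lambda>s. K1 (t(a:=s)) $$ k) = (\<lambda>s. K2 (t(a:=s)) $$ k)"
    using assms(3) k by (auto simp: lb_def)
  then show "(Dd a K1 t - Dd a K2 t) $$ k = 0"
    by (simp add: Dd_nth[OF assms(1)] Dd_nth[OF assms(2)])
qed

lemma lb_P_diff: "der P \<Longrightarrow> (\<forall>N F. lb N F \<longrightarrow> lb (N - 1) (P F)) \<Longrightarrow> lb N (x - y) \<Longrightarrow> lb (N - 1) (P x - P y)"
  by (metis der_diff)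



lemma deriv_upd: "deriv (\<lambda>s. C * (t(d:=s)) a) (t d) = (if a = d then C else (0::complex))"
proof (cases "a = d")
  case True
  then have "(\<lambda>s. C * (t(d:=s)) a) = (\<lambda>s. C * s)" by auto
  then show ?thesis using True by simp
next
  case False
  then have "(\<lambda>s. C * (t(d:=s)) a) = (\<lambda>s. C * t a)" by auto
  then show ?thesis using False by simp
qed

lemma deriv_upd1: "deriv (\<lambda>s. (t(d:=s)) a) (t d) = (if a = d then 1 else (0::complex))"
  using deriv_upd[of 1 t d a] by simp

lemma diff_upd: "(\<lambda>s. C * (t(d:=s)) a) field_differentiable (at x)"
proof (cases "a = d")
  case True
  then have "(\<lambda>s. C * (t(d:=s)) a) = (\<lambda>s. C * s)" by auto
  then show ?thesis by (simp add: field_differentiable_mult field_differentiable_ident)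
next
  case False
  then have "(\<lambda>s. C * (t(d:=s)) a) = (\<lambda>s. C * t a)" by auto
  then show ?thesis by simp
qed

lemma gdl_from_eq: "gdl a t K2 \<Longrightarrow> (\<forall>s. lb N (K1 (t(a:=s)) - K2 (t(a:=s)))) \<Longrightarrow> gdl a t K1"
proof -
  assume g: "gdl a t K2" and e: "\<forall>s. lb N (K1 (t(a:=s)) - K2 (t(a:=s)))"
  obtain N2 where N2: "\<forall>s. lb N2 (K2 (t(a:=s)))" using g by (auto simp: gdl_def)
  have "lb (min N N2) (K1 (t(a:=s)))" for s
  proof -
    have "lb (min N N2) (K1 (t(a:=s)) - K2 (t(a:=s)))" using e lb_mono min.cobounded1 by blast
    moreover have "lb (min N N2) (K2 (t(a:=s)))" using N2 lb_mono min.cobounded2 by blast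
    ultimately have "lb (min N N2) ((K1 (t(a:=s)) - K2 (t(a:=s))) + K2 (t(a:=s)))"
      by (intro lb_add)
    then show ?thesis by simp
  qed
  then show ?thesis unfolding gdl_def by blast
qed

lemma lb_comb:
  assumes "lb A \<alpha>" "lb B \<beta>" "lb C \<gamma>" "lb X d1" "lb X d2" "lb (X - 1) d3"
  shows "lb (X + min A (min B C) - 1) (\<alpha>*d1 + \<beta>*d2 + \<gamma>*d3)"
proof -
  have "lb (A + X) (\<alpha>*d1)" "lb (B + X) (\<beta>*d2)" "lb (C + (X - 1)) (\<gamma>*d3)"
    using assms by (auto intro: lb_mult)
  then show ?thesis by (intro lb_add) (auto elim: lb_mono)
qed

lemma finite_Tdom: "t \<in> Tdom \<Longrightarrow> finite {a. t a \<noteq> 0}" by (simp add: Tdom_def)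

locale core =
  fixes sel :: "nat\<times>nat \<Rightarrow> nat" and c :: "nat\<times>nat" and L :: tser and w :: "nat \<Rightarrow> times \<Rightarrow> complex"
    and H :: tser and P :: "complex fls \<Rightarrow> complex fls" and r :: int and \<epsilon> :: complex
    and t :: times and b :: "nat\<times>nat" and h :: nat
  assumes tT: "t \<in> Tdom"
    and b2: "2 \<le> fst b + snd b"
    and c1: "fst c + snd c < 2"
    and Pder: "der P" and Plb: "\<forall>N F. lb N F \<longrightarrow> lb (N - 1) (P F)" and Pres: "\<forall>F. P F $$ r = 0"
    and r1: "-1 \<le> r" and r2: "r \<le> 1"
    and Lgd: "gd2 b t L"
    and Lb: "\<forall>s. L (t(b:=s)) $$ (-1) \<noteq> 0 \<and> lb (-1) (L (t(b:=s)))"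
    and Lz: "\<forall>s. L (t((1,0):=s)) $$ (-1) \<noteq> 0 \<and> lb (-1) (L (t((1,0):=s)))"
    and eps: "(inverse (L t) * P (L t)) $$ r = \<epsilon>"
    and wb: "\<forall>i. (\<lambda>s. w i (t(b:=s))) field_differentiable at (t b)"
    and wz: "\<forall>i. (\<lambda>s. w i (t((1,0):=s))) field_differentiable at (t (1,0))"
    and Hz: "\<forall>s. lb (-int h) (H (t((1,0):=s)))"
    and laxL: "Dd b L t = P (H t) * Dd (1,0) L t - Dd (1,0) H t * P (L t)"
    and laxM: "Dd b (Orlov sel c L w) t = P (H t) * Dd (1,0) (Orlov sel c L w) t - Dd (1,0) H t * P (Orlov sel c L w t)"
    and canon: "P (L t) * Dd (1,0) (Orlov sel c L w) t - Dd (1,0) L t * P (Orlov sel c L w t) = 1"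
begin

definition F :: "(nat\<times>nat) set" where "F = {a. 2 \<le> fst a + snd a \<and> t a \<noteq> 0} \<union> {b}"

lemma finF: "finite F"
  unfolding F_def using finite_Tdom[OF tT] by (auto intro: finite_subset)

lemma bF: "b \<in> F" by (simp add: F_def)

lemma F2: "a \<in> F \<Longrightarrow> 2 \<le> fst a + snd a" using b2 by (auto simp: F_def)

lemma F10: "a \<in> F \<Longrightarrow> a \<noteq> (1,0)" using b2 by (auto simp: F_def)

lemma cb: "c \<noteq> b" using b2 c1 by auto

definition MN :: "nat \<Rightarrow> tser" where
  "MN N s = (\<Sum>a\<in>F. fls_const (of_nat (sel a) * s a) * L s ^ (sel a - 1)) + fls_const (s c)
     + (\<Sum>i\<in>{1..N}. fls_const (w (i+1) s) * inverse (L s) ^ (i+1))"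

lemma M_MN_line:
  assumes sub: "{a. 2 \<le> fst a + snd a \<and> (t(d:=s)) a \<noteq> 0} \<subseteq> F"
    and Ll: "L (t(d:=s)) $$ (-1) \<noteq> 0" "lb (-1) (L (t(d:=s)))"
  shows "lb (int N + 2) (Orlov sel c L w (t(d:=s)) - MN N (t(d:=s)))"
proof -
  define s' where "s' = t(d:=s)"
  have E: "(\<Sum>a\<in>{a. 2 \<le> fst a + snd a \<and> s' a \<noteq> 0}. fls_const (of_nat (sel a) * s' a) * L s' ^ (sel a - 1))
     = (\<Sum>a\<in>F. fls_const (of_nat (sel a) * s' a) * L s' ^ (sel a - 1))"
  proof (rule sum.mono_neutral_left)
    show "finite F" by (rule finF)
    show "{a. 2 \<le> fst a + snd a \<and> s' a \<noteq> 0} \<subseteq> F" using sub s'_def by simp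
    show "\<forall>a\<in>F - {a. 2 \<le> fst a + snd a \<and> s' a \<noteq> 0}. fls_const (of_nat (sel a) * s' a) * L s' ^ (sel a - 1) = 0"
    proof
      fix a assume "a \<in> F - {a. 2 \<le> fst a + snd a \<and> s' a \<noteq> 0}"
      then have "s' a = 0" using F2 by auto
      then show "fls_const (of_nat (sel a) * s' a) * L s' ^ (sel a - 1) = 0" by simp
    qed
  qed
  have Lnz: "L s' \<noteq> 0" using Ll s'_def by (metis fls_nonzeroI)
  have linv: "lb 1 (inverse (L s'))" using lb_inverse Ll s'_def by blast
  have lpow: "lb (int (i+1)) (inverse (L s') ^ (i+1))" for i
    using lb_power[OF linv, of "i+1"] by simp
  have A: "Abs_fls (\<lambda>k. \<Sum>i\<in>{1..<nat k}. w (i+1) s' * inverse (L s' ^ (i+1)) $$ k) $$ k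
      = (\<Sum>i\<in>{1..<nat k}. w (i+1) s' * inverse (L s' ^ (i+1)) $$ k)" for k
    by (rule nth_Abs_fls_lower_bound[of 2]) auto
  have V: "(\<Sum>i\<in>{1..N}. fls_const (w (i+1) s') * inverse (L s') ^ (i+1)) $$ k
      = (\<Sum>i\<in>{1..<nat k}. w (i+1) s' * inverse (L s' ^ (i+1)) $$ k)" if k: "k < int N + 2" for k
  proof -
    have "(\<Sum>i\<in>{1..N}. fls_const (w (i+1) s') * inverse (L s') ^ (i+1)) $$ k
        = (\<Sum>i\<in>{1..N}. w (i+1) s' * (inverse (L s') ^ (i+1)) $$ k)"
      by (simp add: fls_nth_sum)
    also have "\<dots> = (\<Sum>i\<in>{1..<nat k}. w (i+1) s' * (inverse (L s') ^ (i+1)) $$ k)"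
    proof (rule sum.mono_neutral_right)
      show "finite {1..N}" by simp
      show "{1..<nat k} \<subseteq> {1..N}" using k by auto
      show "\<forall>i\<in>{1..N} - {1..<nat k}. w (i + 1) s' * (inverse (L s') ^ (i + 1)) $$ k = 0"
      proof
        fix i assume "i \<in> {1..N} - {1..<nat k}"
        then have "k < int (i+1)" by auto
        then show "w (i + 1) s' * (inverse (L s') ^ (i + 1)) $$ k = 0"
          using lpow[of i] by (simp add: lb_def)
      qed
    qed
    finally show ?thesis by (simp add: power_inverse)
  qed
  show ?thesis unfolding lb_def
  proof (intro allI impI)
    fix k assume k: "k < int N + 2"
    show "(Orlov sel c L w (t(d := s)) - MN N (t(d := s))) $$ k = 0"
      using A[of k] V[OF k] E unfolding s'_def[symmetric] Orlov_def MN_def by simp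
  qed
qed

lemma M_MN_b: "lb (int N + 2) (Orlov sel c L w (t(b:=s)) - MN N (t(b:=s)))"
  by (rule M_MN_line) (use Lb in \<open>auto simp: F_def\<close>)

lemma M_MN_z: "lb (int N + 2) (Orlov sel c L w (t((1,0):=s)) - MN N (t((1,0):=s)))"
  by (rule M_MN_line) (use Lz in \<open>auto simp: F_def\<close>)

lemma gd2_inv: "gd2 b t (\<lambda>s. inverse (L s))"
  using gd_inverse[of b t L] gd_inverse[of "(1,0)" t L] Lgd Lb Lz by (simp add: gd2_def)

lemma gd2_MN: "gd2 b t (MN N)"
proof -
  have c1: "gd2 b t (\<lambda>s. fls_const (of_nat (sel a) * s a))" for a
    unfolding gd2_def by (intro conjI gd_const diff_upd)
  have c2d: "gd d t (\<lambda>s. fls_const (s c))" for d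
    by (rule gd_const) (use diff_upd[of 1 t d c] in simp)
  have c2: "gd2 b t (\<lambda>s. fls_const (s c))" using c2d by (simp add: gd2_def)
  have c3: "gd2 b t (\<lambda>s. fls_const (w i s))" for i
    using wb wz by (simp add: gd2_def gd_const)
  show ?thesis unfolding MN_def
    by (intro gd2_add gd2_sum gd2_mult gd2_power c1 c2 c3 gd2_inv Lgd finF finite_atLeastAtMost)
qed

definition Bw :: "nat \<Rightarrow> complex" where "Bw i = deriv (\<lambda>s. w i (t(b:=s))) (t b)"
definition Zw :: "nat \<Rightarrow> complex" where "Zw i = deriv (\<lambda>s. w i (t((1,0):=s))) (t (1,0))"
definition e :: complex where "e = deriv (\<lambda>s. (t((1,0):=s)) c) (t (1,0))"

definition T1 :: "nat \<Rightarrow> complex fls" where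
  "T1 N = fls_const (of_nat (sel b)) * L t ^ (sel b - 1) + (\<Sum>i\<in>{1..N}. fls_const (Bw (i+1)) * inverse (L t) ^ (i+1))"
definition W :: "nat \<Rightarrow> complex fls" where
  "W N = fls_const e + (\<Sum>i\<in>{1..N}. fls_const (Zw (i+1)) * inverse (L t) ^ (i+1))"

lemma Om_MN:
  assumes OL: "Om b t \<alpha> \<beta> \<gamma> P L = 0"
  shows "Om b t \<alpha> \<beta> \<gamma> P (MN N) = \<alpha> * T1 N + \<beta> * W N"
proof -
  have Linz: "\<forall>s. L (t(b:=s)) \<noteq> 0" "\<forall>s. L (t((1,0):=s)) \<noteq> 0"
    using Lb Lz by (metis fls_nonzeroI)+
  have OI: "Om b t \<alpha> \<beta> \<gamma> P (\<lambda>s. inverse (L s)) = 0"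
    by (rule Om_inverse[OF Pder Lgd gd2_inv OL Linz])
  have OIp: "Om b t \<alpha> \<beta> \<gamma> P (\<lambda>s. inverse (L s) ^ n) = 0" for n
    by (rule Om_power[OF Pder gd2_inv OI])
  have OLp: "Om b t \<alpha> \<beta> \<gamma> P (\<lambda>s. L s ^ n) = 0" for n
    by (rule Om_power[OF Pder Lgd OL])
  have c1: "gd2 b t (\<lambda>s. fls_const (of_nat (sel a) * s a))" for a
    unfolding gd2_def by (intro conjI gd_const diff_upd)
  have c2d: "gd d t (\<lambda>s. fls_const (s c))" for d
    by (rule gd_const) (use diff_upd[of 1 t d c] in simp)
  have c2: "gd2 b t (\<lambda>s. fls_const (s c))" using c2d by (simp add: gd2_def)
  have c3: "gd2 b t (\<lambda>s. fls_const (w i s))" for i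
    using wb wz by (simp add: gd2_def gd_const)
  have g1: "gd2 b t (\<lambda>s. fls_const (of_nat (sel a) * s a) * L s ^ (sel a - 1))" for a
    by (intro gd2_mult c1 gd2_power Lgd)
  have g3: "gd2 b t (\<lambda>s. fls_const (w (i+1) s) * inverse (L s) ^ (i+1))" for i
    by (intro gd2_mult c3 gd2_power gd2_inv)
  have S1: "Om b t \<alpha> \<beta> \<gamma> P (\<lambda>s. \<Sum>a\<in>F. fls_const (of_nat (sel a) * s a) * L s ^ (sel a - 1))
     = \<alpha> * (fls_const (of_nat (sel b)) * L t ^ (sel b - 1))"
  proof -
    have "Om b t \<alpha> \<beta> \<gamma> P (\<lambda>s. \<Sum>a\<in>F. fls_const (of_nat (sel a) * s a) * L s ^ (sel a - 1))
       = (\<Sum>a\<in>F. Om b t \<alpha> \<beta> \<gamma> P (\<lambda>s. fls_const (of_nat (sel a) * s a) * L s ^ (sel a - 1)))"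
      by (rule Om_sum[OF Pder finF g1])
    also have "\<dots> = (\<Sum>a\<in>F. \<alpha> * fls_const (if a = b then of_nat (sel a) else 0) * L t ^ (sel a - 1))"
    proof (rule sum.cong[OF refl])
      fix a assume aF: "a \<in> F"
      have "Om b t \<alpha> \<beta> \<gamma> P (\<lambda>s. fls_const (of_nat (sel a) * s a) * L s ^ (sel a - 1))
          = Om b t \<alpha> \<beta> \<gamma> P (\<lambda>s. fls_const (of_nat (sel a) * s a)) * L t ^ (sel a - 1)"
        using Om_mult[OF Pder c1 gd2_power[OF Lgd]] OLp by simp
      also have "\<dots> = \<alpha> * fls_const (if a = b then of_nat (sel a) else 0) * L t ^ (sel a - 1)"
        using F10[OF aF] by (simp add: Om_const[OF Pder] deriv_upd)
      finally show "Om b t \<alpha> \<beta> \<gamma> P (\<lambda>s. fls_const (of_nat (sel a) * s a) * L s ^ (sel a - 1))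
          = \<alpha> * fls_const (if a = b then of_nat (sel a) else 0) * L t ^ (sel a - 1)" .
    qed
    also have "\<dots> = \<alpha> * (fls_const (of_nat (sel b)) * L t ^ (sel b - 1))"
    proof -
      have "(\<Sum>a\<in>F. \<alpha> * fls_const (if a = b then of_nat (sel a) else 0) * L t ^ (sel a - 1))
         = (\<Sum>a\<in>F. if a = b then \<alpha> * fls_const (of_nat (sel a)) * L t ^ (sel a - 1) else 0)"
        by (rule sum.cong) auto
      also have "\<dots> = \<alpha> * fls_const (of_nat (sel b)) * L t ^ (sel b - 1)"
        using finF bF by (simp add: sum.delta)
      finally show ?thesis by (simp add: mult.assoc)
    qed
    finally show ?thesis .
  qed
  have S2: "Om b t \<alpha> \<beta> \<gamma> P (\<lambda>s. fls_const (s c)) = \<beta> * fls_const e"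
    using Om_const[OF Pder, of b t \<alpha> \<beta> \<gamma> "\<lambda>s. s c"] cb deriv_upd1[of t b c]
    by (simp add: e_def)
  have S3: "Om b t \<alpha> \<beta> \<gamma> P (\<lambda>s. \<Sum>i\<in>{1..N}. fls_const (w (i+1) s) * inverse (L s) ^ (i+1))
     = \<alpha> * (\<Sum>i\<in>{1..N}. fls_const (Bw (i+1)) * inverse (L t) ^ (i+1))
       + \<beta> * (\<Sum>i\<in>{1..N}. fls_const (Zw (i+1)) * inverse (L t) ^ (i+1))"
  proof -
    have "Om b t \<alpha> \<beta> \<gamma> P (\<lambda>s. \<Sum>i\<in>{1..N}. fls_const (w (i+1) s) * inverse (L s) ^ (i+1))
       = (\<Sum>i\<in>{1..N}. Om b t \<alpha> \<beta> \<gamma> P (\<lambda>s. fls_const (w (i+1) s) * inverse (L s) ^ (i+1)))"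
      by (rule Om_sum[OF Pder _ g3]) simp
    also have "\<dots> = (\<Sum>i\<in>{1..N}. \<alpha> * (fls_const (Bw (i+1)) * inverse (L t) ^ (i+1))
        + \<beta> * (fls_const (Zw (i+1)) * inverse (L t) ^ (i+1)))"
    proof (rule sum.cong[OF refl])
      fix i
      show "Om b t \<alpha> \<beta> \<gamma> P (\<lambda>s. fls_const (w (i+1) s) * inverse (L s) ^ (i+1))
        = \<alpha> * (fls_const (Bw (i+1)) * inverse (L t) ^ (i+1))
        + \<beta> * (fls_const (Zw (i+1)) * inverse (L t) ^ (i+1))"
      proof -
        have m: "Om b t \<alpha> \<beta> \<gamma> P (\<lambda>s. fls_const (w (i+1) s) * inverse (L s) ^ (i+1))
          = Om b t \<alpha> \<beta> \<gamma> P (\<lambda>s. fls_const (w (i+1) s)) * inverse (L t) ^ (i+1)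
            + fls_const (w (i+1) t) * Om b t \<alpha> \<beta> \<gamma> P (\<lambda>s. inverse (L s) ^ (i+1))"
          by (rule Om_mult[OF Pder c3 gd2_power[OF gd2_inv]])
        show ?thesis by (simp only: m OIp Om_const[OF Pder] Bw_def Zw_def) (simp add: algebra_simps)
      qed
    qed
    also have "\<dots> = \<alpha> * (\<Sum>i\<in>{1..N}. fls_const (Bw (i+1)) * inverse (L t) ^ (i+1))
       + \<beta> * (\<Sum>i\<in>{1..N}. fls_const (Zw (i+1)) * inverse (L t) ^ (i+1))"
      by (simp add: sum.distrib sum_distrib_left)
    finally show ?thesis .
  qed
  have "Om b t \<alpha> \<beta> \<gamma> P (MN N) =
     Om b t \<alpha> \<beta> \<gamma> P (\<lambda>s. \<Sum>a\<in>F. fls_const (of_nat (sel a) * s a) * L s ^ (sel a - 1))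
     + Om b t \<alpha> \<beta> \<gamma> P (\<lambda>s. fls_const (s c))
     + Om b t \<alpha> \<beta> \<gamma> P (\<lambda>s. \<Sum>i\<in>{1..N}. fls_const (w (i+1) s) * inverse (L s) ^ (i+1))"
  proof -
    define A where "A = (\<lambda>s. \<Sum>a\<in>F. fls_const (of_nat (sel a) * s a) * L s ^ (sel a - 1))"
    define B where "B = (\<lambda>s::times. fls_const (s c))"
    define C where "C = (\<lambda>s. \<Sum>i\<in>{1..N}. fls_const (w (i+1) s) * inverse (L s) ^ (i+1))"
    have gA: "gd2 b t A" unfolding A_def by (intro gd2_sum finF g1)
    have gB: "gd2 b t B" unfolding B_def by (rule c2)
    have gC: "gd2 b t C" unfolding C_def by (intro gd2_sum g3) simp
    have "MN N = (\<lambda>s. (A s + B s) + C s)" unfolding MN_def A_def B_def C_def by (rule ext) simp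
    then have "Om b t \<alpha> \<beta> \<gamma> P (MN N) = Om b t \<alpha> \<beta> \<gamma> P (\<lambda>s. A s + B s) + Om b t \<alpha> \<beta> \<gamma> P C"
      using Om_add[OF Pder gd2_add[OF gA gB] gC] by simp
    also have "\<dots> = Om b t \<alpha> \<beta> \<gamma> P A + Om b t \<alpha> \<beta> \<gamma> P B + Om b t \<alpha> \<beta> \<gamma> P C"
      using Om_add[OF Pder gA gB] by simp
    finally show ?thesis unfolding A_def B_def C_def .
  qed
  also have "\<dots> = \<alpha> * T1 N + \<beta> * W N"
    unfolding S1 S2 S3 T1_def W_def by (simp add: algebra_simps)
  finally show ?thesis .
qed

end



context core begin

lemma R_coef: assumes "1 \<le> j" "j \<le> N"
  shows "(T1 N * (L t ^ j * P (L t))) $$ r = \<epsilon> * Bw (j+1)"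
proof -
  have Ltnz: "L t \<noteq> 0" using Lb[rule_format, of "t b"] by (metis fls_nonzeroI fun_upd_triv)
  define Y where "Y = L t ^ j * P (L t)"
  have t1: "(fls_const (of_nat (sel b)) * L t ^ (sel b - 1) * Y) $$ r = 0"
  proof -
    have "L t ^ (sel b - 1) * Y = L t ^ (sel b - 1 + j) * P (L t)"
      unfolding Y_def by (simp add: power_add mult.assoc)
    then show ?thesis using R_pow[OF Pder Pres] by (simp add: mult.assoc)
  qed
  have t2: "(fls_const (Bw (i+1)) * inverse (L t) ^ (i+1) * Y) $$ r = (if i = j then Bw (i+1) * \<epsilon> else 0)" for i
  proof -
    have "inverse (L t) ^ (i+1) * Y = (if i < j then L t ^ (j - i - 1) else inverse (L t) ^ (i + 1 - j)) * P (L t)"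
      unfolding Y_def using invpow_pow[OF Ltnz, of i j] by (simp add: mult.assoc[symmetric])
    moreover have "((if i < j then L t ^ (j - i - 1) else inverse (L t) ^ (i + 1 - j)) * P (L t)) $$ r
       = (if i = j then \<epsilon> else 0)"
    proof (cases "i < j")
      case True then show ?thesis using R_pow[OF Pder Pres] by auto
    next
      case False
      show ?thesis
      proof (cases "i = j")
        case True then show ?thesis using eps by simp
      next
        case False2: False
        then have "2 \<le> i + 1 - j" using False by auto
        then show ?thesis using False False2 R_invpow[OF Pder Pres Ltnz] by auto
      qed
    qed
    ultimately show ?thesis by (simp add: mult.assoc)
  qed
  have "(T1 N * Y) $$ r = (fls_const (of_nat (sel b)) * L t ^ (sel b - 1) * Y) $$ r
      + (\<Sum>i\<in>{1..N}. (fls_const (Bw (i+1)) * inverse (L t) ^ (i+1) * Y) $$ r)"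
    unfolding T1_def by (simp add: distrib_right sum_distrib_right fls_nth_sum)
  also have "\<dots> = (\<Sum>i\<in>{1..N}. if i = j then Bw (i+1) * \<epsilon> else 0)"
    by (simp only: t1 t2) simp
  also have "\<dots> = \<epsilon> * Bw (j+1)" using assms by (simp add: sum.delta)
  finally show ?thesis unfolding Y_def .
qed

theorem main: assumes j: "1 \<le> j" shows "\<epsilon> * Bw (j+1) = (L t ^ j * P (H t)) $$ r"
proof -
  define N where "N = j + 2*h + 10"
  define M where "M = Orlov sel c L w"
  have tb: "t(b := t b) = t" and tz: "t((1,0) := t (1,0)) = t" by simp_all
  have gN: "gd2 b t (MN N)" by (rule gd2_MN)
  have gdlMNb: "gdl b t (MN N)" and gdlMNz: "gdl (1,0) t (MN N)"
    using gN by (auto simp: gd2_def gd_def)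
  have gdlMb: "gdl b t M" unfolding M_def by (rule gdl_from_eq[OF gdlMNb]) (use M_MN_b in blast)
  have gdlMz: "gdl (1,0) t M" unfolding M_def by (rule gdl_from_eq[OF gdlMNz]) (use M_MN_z in blast)
  have dB: "lb (int N + 2) (Dd b M t - Dd b (MN N) t)"
    by (rule lb_eqlow_Dd[OF gdlMb gdlMNb]) (use M_MN_b M_def in blast)
  have dZ: "lb (int N + 2) (Dd (1,0) M t - Dd (1,0) (MN N) t)"
    by (rule lb_eqlow_Dd[OF gdlMz gdlMNz]) (use M_MN_z M_def in blast)
  have Mt: "lb (int N + 2) (M t - MN N t)" using M_MN_b[of N "t b"] tb M_def by simp
  have dP: "lb (int N + 2 - 1) (P (M t) - P (MN N t))" by (rule lb_P_diff[OF Pder Plb Mt])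
  have Ht: "lb (-int h) (H t)" using Hz[rule_format, of "t (1,0)"] tz by simp
  have PH: "lb (-int h - 1) (P (H t))" using Plb Ht by blast
  have ZH: "lb (-int h) (Dd (1,0) H t)" by (rule Dd_lb[OF Hz])
  have Lt: "lb (-1) (L t)" using Lb[rule_format, of "t b"] tb by simp
  have PL: "lb (-2) (P (L t))" using Plb Lt by fastforce
  have ZL: "lb (-1) (Dd (1,0) L t)" by (rule Dd_lb) (use Lz in blast)
  have OPL: "Om b t 1 (- P (H t)) (Dd (1,0) H t) P L = 0"
    unfolding Om_def laxL by (simp add: algebra_simps)
  have OPM: "Om b t 1 (- P (H t)) (Dd (1,0) H t) P M = 0"
    unfolding Om_def M_def laxM by (simp add: algebra_simps)
  have OPMN: "Om b t 1 (- P (H t)) (Dd (1,0) H t) P (MN N) = T1 N - P (H t) * W N"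
    using Om_MN[OF OPL] by simp
  have "lb (int N + 2 + min 0 (min (-int h - 1) (-int h)) - 1)
     (1 * (Dd b M t - Dd b (MN N) t) + (- P (H t)) * (Dd (1,0) M t - Dd (1,0) (MN N) t)
      + Dd (1,0) H t * (P (M t) - P (MN N t)))"
    by (rule lb_comb[OF lb_one lb_uminus[OF PH] ZH dB dZ dP])
  moreover have "1 * (Dd b M t - Dd b (MN N) t) + (- P (H t)) * (Dd (1,0) M t - Dd (1,0) (MN N) t)
      + Dd (1,0) H t * (P (M t) - P (MN N t))
      = Om b t 1 (- P (H t)) (Dd (1,0) H t) P M - Om b t 1 (- P (H t)) (Dd (1,0) H t) P (MN N)"
    unfolding Om_def by (simp add: algebra_simps)
  ultimately have "lb (int N - int h) (- (T1 N - P (H t) * W N))"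
    unfolding OPM OPMN by (auto elim: lb_mono)
  then have E1: "lb (int N - int h) (T1 N - P (H t) * W N)" using lb_uminus by fastforce
  have OQL: "Om b t 0 (P (L t)) (- Dd (1,0) L t) P L = 0"
    unfolding Om_def by (simp add: algebra_simps)
  have OQM: "Om b t 0 (P (L t)) (- Dd (1,0) L t) P M = 1"
    unfolding Om_def M_def using canon by (simp add: algebra_simps)
  have OQMN: "Om b t 0 (P (L t)) (- Dd (1,0) L t) P (MN N) = P (L t) * W N"
    using Om_MN[OF OQL] by simp
  have "lb (int N + 2 + min (-2) (min (-2) (-1)) - 1)
     (0 * (Dd b M t - Dd b (MN N) t) + P (L t) * (Dd (1,0) M t - Dd (1,0) (MN N) t)
      + (- Dd (1,0) L t) * (P (M t) - P (MN N t)))"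
    by (rule lb_comb[OF lb_zero PL lb_uminus[OF ZL] dB dZ dP])
  moreover have "0 * (Dd b M t - Dd b (MN N) t) + P (L t) * (Dd (1,0) M t - Dd (1,0) (MN N) t)
      + (- Dd (1,0) L t) * (P (M t) - P (MN N t))
      = Om b t 0 (P (L t)) (- Dd (1,0) L t) P M - Om b t 0 (P (L t)) (- Dd (1,0) L t) P (MN N)"
    unfolding Om_def by (simp add: algebra_simps)
  ultimately have "lb (int N - int h - 1) (1 - P (L t) * W N)"
    unfolding OQM OQMN by (auto elim: lb_mono)
  then have E2: "lb (int N - int h - 1) (P (L t) * W N - 1)" using lb_uminus by fastforce
  have Lj: "lb (- int j) (L t ^ j)" using lb_power[OF Lt, of j] by simp
  have Y1: "lb (- int j - 2) (L t ^ j * P (L t))" using lb_mult[OF Lj PL] by (simp add: algebra_simps)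
  have Y2: "lb (- int j - int h - 1) (L t ^ j * P (H t))" using lb_mult[OF Lj PH] by (auto elim: lb_mono)
  have "lb (int N - int h + (- int j - 2)) ((T1 N - P (H t) * W N) * (L t ^ j * P (L t)))"
    by (rule lb_mult[OF E1 Y1])
  moreover have "lb (int N - int h - 1 + (- int j - int h - 1)) ((P (L t) * W N - 1) * (L t ^ j * P (H t)))"
    by (rule lb_mult[OF E2 Y2])
  ultimately have "lb 8 ((T1 N - P (H t) * W N) * (L t ^ j * P (L t)) + (P (L t) * W N - 1) * (L t ^ j * P (H t)))"
    unfolding N_def by (intro lb_add) (auto elim: lb_mono)
  moreover have "(T1 N - P (H t) * W N) * (L t ^ j * P (L t)) + (P (L t) * W N - 1) * (L t ^ j * P (H t))
     = T1 N * (L t ^ j * P (L t)) - L t ^ j * P (H t)"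
    by (simp add: algebra_simps)
  ultimately have "lb 8 (T1 N * (L t ^ j * P (L t)) - L t ^ j * P (H t))" by simp
  then have "(T1 N * (L t ^ j * P (L t))) $$ r = (L t ^ j * P (H t)) $$ r"
    using r2 by (auto simp: lb_def)
  then show ?thesis using R_coef[OF j, of N] unfolding N_def by simp
qed

end



lemma Tdom_upd: "t \<in> Tdom \<Longrightarrow> t(a:=s) \<in> Tdom"
proof -
  assume "t \<in> Tdom"
  then have "finite (insert a {x. t x \<noteq> 0})" by (simp add: Tdom_def)
  moreover have "{x. (t(a:=s)) x \<noteq> 0} \<subseteq> insert a {x. t x \<noteq> 0}" by auto
  ultimately have "finite {x. (t(a:=s)) x \<noteq> 0}" by (rule finite_subset[rotated])
  then show ?thesis unfolding Tdom_def by simp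
qed

lemma Dd_from_pd: "(\<forall>k. pd a (\<lambda>s. K s $$ k) t = G $$ k) \<Longrightarrow> Dd a K t = G"
  unfolding Dd_def pd_def by (simp add: fls_nth_inverse)

lemma der_dpx: "der dpx"
  unfolding der_def dpx_def by (simp add: algebra_simps)

lemma der_fls_deriv: "der fls_deriv"
  unfolding der_def by (simp add: algebra_simps)

lemma eps_x: assumes "L $$ (-1) = 1" "lb (-1) L" shows "(inverse L * dpx L) $$ 1 = 1"
proof -
  have sd: "fls_subdegree L = -1" using assms by (intro fls_subdegree_eqI) (auto simp: lb_def)
  have Lnz: "L \<noteq> 0" using assms by (metis fls_nonzeroI one_neq_zero)
  have i1: "inverse L $$ 1 = 1" using fls_inverse_base[OF Lnz] sd assms by simp
  have li: "lb 1 (inverse L)" using lb_inverse assms by simp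
  have ld: "lb 0 (dpx L)" using lb_dpx[OF assms(2)] by simp
  have "(inverse L * dpx L) $$ 1 = (\<Sum>i=1..1. inverse L $$ i * dpx L $$ (1 - i))"
    using times_nth_lb[OF li ld, of 1] by simp
  also have "\<dots> = 1" using i1 assms by (simp add: dpx_nth)
  finally show ?thesis .
qed

lemma eps_p: assumes "L $$ (-1) \<noteq> 0" "lb (-1) L" shows "(inverse L * fls_deriv L) $$ (-1) = -1"
proof -
  have sd: "fls_subdegree L = -1" using assms by (intro fls_subdegree_eqI) (auto simp: lb_def)
  have Lnz: "L \<noteq> 0" using assms by (metis fls_nonzeroI)
  have i1: "inverse L $$ 1 = inverse (L $$ (-1))" using fls_inverse_base[OF Lnz] sd by simp
  have li: "lb 1 (inverse L)" using lb_inverse assms by simp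
  have ld: "lb (-2) (fls_deriv L)" using lb_deriv[OF assms(2)] by simp
  have "(inverse L * fls_deriv L) $$ (-1) = (\<Sum>i=1..1. inverse L $$ i * fls_deriv L $$ (-1 - i))"
    using times_nth_lb[OF li ld, of "-1"] by simp
  also have "\<dots> = -1" using i1 assms by simp
  finally show ?thesis .
qed

lemma R_powpow: assumes "der P" "\<forall>F. P F $$ r = 0" shows "(x ^ a * P (x ^ b)) $$ r = 0"
proof (cases b)
  case 0 then show ?thesis using der_one[OF assms(1)] by simp
next
  case (Suc k)
  have "x ^ a * P (x ^ b) = fls_const (of_nat (Suc k)) * (x ^ (a + k) * P x)"
    using der_power[OF assms(1), of x k] Suc by (simp add: fls_of_nat power_add algebra_simps)
  then show ?thesis using R_pow[OF assms] by simp
qed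

locale dds =
  fixes Lx Lh :: tser and v vh :: "nat \<Rightarrow> times \<Rightarrow> complex"
  assumes L_form: "\<forall>t\<in>Tdom. fls_nth (Lx t) (-1) = 1 \<and> (\<forall>k < -1. fls_nth (Lx t) k = 0)"
    and Lh_form: "\<forall>t\<in>Tdom. fls_nth (Lh t) (-1) \<noteq> 0 \<and> (\<forall>k < -1. fls_nth (Lh t) k = 0)"
    and diff_L: "\<forall>k. pdifferentiable (\<lambda>t. fls_nth (Lx t) k)"
    and diff_Lh: "\<forall>k. pdifferentiable (\<lambda>t. fls_nth (Lh t) k)"
    and diff_v: "\<forall>i. pdifferentiable (v i)"
    and diff_vh: "\<forall>i. pdifferentiable (vh i)"
    and Lax_L: "\<forall>a t k. 1 \<le> fst a + snd a \<longrightarrow> t \<in> Tdom \<longrightarrow>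
                  pd a (\<lambda>s. fls_nth (Lx s) k) t = fls_nth (PBx (Hx Lx Lh a) Lx t) k"
    and Lax_M: "\<forall>a t k. 1 \<le> fst a + snd a \<longrightarrow> t \<in> Tdom \<longrightarrow>
                  pd a (\<lambda>s. fls_nth (Mx Lx v s) k) t = fls_nth (PBx (Hx Lx Lh a) (Mx Lx v) t) k"
    and Lax_Lh: "\<forall>a t k. 1 \<le> fst a + snd a \<longrightarrow> t \<in> Tdom \<longrightarrow>
                  pd a (\<lambda>s. fls_nth (Lh s) k) t = fls_nth (PBp (Hp Lx Lh a) Lh t) k"
    and Lax_Mh: "\<forall>a t k. 1 \<le> fst a + snd a \<longrightarrow> t \<in> Tdom \<longrightarrow>
                  pd a (\<lambda>s. fls_nth (Mp Lh vh s) k) t = fls_nth (PBp (Hp Lx Lh a) (Mp Lh vh) t) k"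
    and canon: "\<forall>t\<in>Tdom. PBx Lx (Mx Lx v) t = 1"
    and canon_h: "\<forall>t\<in>Tdom. PBp Lh (Mp Lh vh) t = 1"
begin

lemma Lx_lb: "s \<in> Tdom \<Longrightarrow> lb (-1) (Lx s)" using L_form by (simp add: lb_def)
lemma Lh_lb: "s \<in> Tdom \<Longrightarrow> lb (-1) (Lh s)" using Lh_form by (simp add: lb_def)

lemma Hx_nth: assumes "s \<in> Tdom" shows "Hx Lx Lh d s $$ k = Hcoef Lx Lh d s (-k)"
  unfolding Hx_def
proof (rule nth_Abs_fls_lower_bound[of "- int (fst d)"], intro allI impI)
  fix n assume n: "n < - int (fst d)"
  have "lb (int (fst d) * -1) (Lx s ^ fst d)" by (rule lb_power[OF Lx_lb[OF assms]])
  then show "Hcoef Lx Lh d s (- n) = 0" using n by (auto simp: Hcoef_def lb_def)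
qed

lemma Hp_nth: assumes "s \<in> Tdom" shows "Hp Lx Lh d s $$ k = Hcoef Lx Lh d s k"
  unfolding Hp_def
proof (rule nth_Abs_fls_lower_bound[of "- int (snd d)"], intro allI impI)
  fix n assume n: "n < - int (snd d)"
  have "lb (int (snd d) * -1) (Lh s ^ snd d)" by (rule lb_power[OF Lh_lb[OF assms]])
  then show "Hcoef Lx Lh d s n = 0" using n by (auto simp: Hcoef_def lb_def)
qed

lemma Hx_lb: "s \<in> Tdom \<Longrightarrow> lb (- int (fst d)) (Hx Lx Lh d s)"
proof -
  assume s: "s \<in> Tdom"
  have "lb (int (fst d) * -1) (Lx s ^ fst d)" by (rule lb_power[OF Lx_lb[OF s]])
  then show ?thesis using Hx_nth[OF s] by (auto simp: lb_def Hcoef_def)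
qed
lemma Hp_lb: "s \<in> Tdom \<Longrightarrow> lb (- int (snd d)) (Hp Lx Lh d s)"
proof -
  assume s: "s \<in> Tdom"
  have "lb (int (snd d) * -1) (Lh s ^ snd d)" by (rule lb_power[OF Lh_lb[OF s]])
  then show ?thesis using Hp_nth[OF s] by (auto simp: lb_def Hcoef_def)
qed

lemma pdiff: "pdifferentiable f \<Longrightarrow> t \<in> Tdom \<Longrightarrow> (\<lambda>s. f (t(a:=s))) field_differentiable at (t a)"
  unfolding pdifferentiable_def by (drule (1) bspec) (erule spec)

lemma gd_Lx: assumes t: "t \<in> Tdom" shows "gd a t Lx"
  unfolding gd_def gdl_def
proof (intro conjI allI exI)
  show "(\<lambda>s. Lx (t(a := s)) $$ k) field_differentiable at (t a)" for k
    using pdiff[OF diff_L[rule_format, of k] t, of a] by simp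
  show "lb (-1) (Lx (t(a := s)))" for s by (rule Lx_lb[OF Tdom_upd[OF t]])
qed
lemma gd_Lh: assumes t: "t \<in> Tdom" shows "gd a t Lh"
  unfolding gd_def gdl_def
proof (intro conjI allI exI)
  show "(\<lambda>s. Lh (t(a := s)) $$ k) field_differentiable at (t a)" for k
    using pdiff[OF diff_Lh[rule_format, of k] t, of a] by simp
  show "lb (-1) (Lh (t(a := s)))" for s by (rule Lh_lb[OF Tdom_upd[OF t]])
qed

lemma coreX: assumes t: "t \<in> Tdom" and d: "2 \<le> fst d + snd d"
  shows "core fst (1,0) Lx v (Hx Lx Lh d) dpx 1 1 t d (fst d)"
proof
  show "t \<in> Tdom" "2 \<le> fst d + snd d" "fst (1::nat, 0::nat) + snd (1::nat, 0::nat) < 2" by (simp_all add: t d)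
  show "der dpx" by (rule der_dpx)
  show "\<forall>N F. lb N F \<longrightarrow> lb (N - 1) (dpx F)"
  proof (intro allI impI)
    fix N F assume "lb N F"
    then have "lb (N+1) (dpx F)" by (rule lb_dpx)
    then show "lb (N - 1) (dpx F)" by (rule lb_mono) simp
  qed
  show "\<forall>F. dpx F $$ 1 = 0" by (simp add: dpx_nth)
  show "-1 \<le> (1::int)" "(1::int) \<le> 1" by simp_all
  show "gd2 d t Lx" by (simp add: gd2_def gd_Lx t)
  show "\<forall>s. Lx (t(d:=s)) $$ (-1) \<noteq> 0 \<and> lb (-1) (Lx (t(d:=s)))"
    using L_form Lx_lb Tdom_upd[OF t] by simp
  show "\<forall>s. Lx (t((1,0):=s)) $$ (-1) \<noteq> 0 \<and> lb (-1) (Lx (t((1,0):=s)))"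
    using L_form Lx_lb Tdom_upd[OF t] by simp
  show "(inverse (Lx t) * dpx (Lx t)) $$ 1 = 1" using eps_x L_form Lx_lb t by simp
  show "\<forall>i. (\<lambda>s. v i (t(d:=s))) field_differentiable at (t d)" using pdiff[OF diff_v[rule_format] t] by simp
  show "\<forall>i. (\<lambda>s. v i (t((1,0):=s))) field_differentiable at (t (1,0))" using pdiff[OF diff_v[rule_format] t] by simp
  show "\<forall>s. lb (- int (fst d)) (Hx Lx Lh d (t((1,0):=s)))" using Hx_lb[OF Tdom_upd[OF t]] by simp
  have d1: "1 \<le> fst d + snd d" using d by simp
  show "Dd d Lx t = dpx (Hx Lx Lh d t) * Dd (1,0) Lx t - Dd (1,0) (Hx Lx Lh d) t * dpx (Lx t)"
    using Dd_from_pd[of d Lx t "PBx (Hx Lx Lh d) Lx t"] Lax_L d1 t by (simp add: PBx_def dz_Dd)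
  show "Dd d (Orlov fst (1,0) Lx v) t = dpx (Hx Lx Lh d t) * Dd (1,0) (Orlov fst (1,0) Lx v) t
      - Dd (1,0) (Hx Lx Lh d) t * dpx (Orlov fst (1,0) Lx v t)"
  proof -
    have "\<forall>k. pd d (\<lambda>s. Mx Lx v s $$ k) t = PBx (Hx Lx Lh d) (Mx Lx v) t $$ k" by (intro allI) (rule Lax_M[rule_format, OF d1 t])
    then have "Dd d (Mx Lx v) t = PBx (Hx Lx Lh d) (Mx Lx v) t" by (rule Dd_from_pd)
    then show ?thesis by (simp add: PBx_def dz_Dd Mx_def)
  qed
  show "dpx (Lx t) * Dd (1,0) (Orlov fst (1,0) Lx v) t - Dd (1,0) Lx t * dpx (Orlov fst (1,0) Lx v t) = 1"
    using canon t by (simp add: PBx_def dz_Dd Mx_def)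
qed

lemma coreP: assumes t: "t \<in> Tdom" and d: "2 \<le> fst d + snd d"
  shows "core snd (0,1) Lh vh (Hp Lx Lh d) fls_deriv (-1) (-1) t d (snd d)"
proof
  show "t \<in> Tdom" "2 \<le> fst d + snd d" "fst (0::nat, 1::nat) + snd (0::nat, 1::nat) < 2" by (simp_all add: t d)
  show "der fls_deriv" by (rule der_fls_deriv)
  show "\<forall>N F. lb N F \<longrightarrow> lb (N - 1) (fls_deriv F)" by (intro allI impI lb_deriv)
  show "\<forall>F. fls_deriv F $$ (-1) = 0" by (simp add: fls_deriv_residue)
  show "-1 \<le> (-1::int)" "(-1::int) \<le> 1" by simp_all
  show "gd2 d t Lh" by (simp add: gd2_def gd_Lh t)
  show "\<forall>s. Lh (t(d:=s)) $$ (-1) \<noteq> 0 \<and> lb (-1) (Lh (t(d:=s)))"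
    using Lh_form Lh_lb Tdom_upd[OF t] by simp
  show "\<forall>s. Lh (t((1,0):=s)) $$ (-1) \<noteq> 0 \<and> lb (-1) (Lh (t((1,0):=s)))"
    using Lh_form Lh_lb Tdom_upd[OF t] by simp
  show "(inverse (Lh t) * fls_deriv (Lh t)) $$ (-1) = -1" using eps_p Lh_form Lh_lb t by simp
  show "\<forall>i. (\<lambda>s. vh i (t(d:=s))) field_differentiable at (t d)" using pdiff[OF diff_vh[rule_format] t] by simp
  show "\<forall>i. (\<lambda>s. vh i (t((1,0):=s))) field_differentiable at (t (1,0))" using pdiff[OF diff_vh[rule_format] t] by simp
  show "\<forall>s. lb (- int (snd d)) (Hp Lx Lh d (t((1,0):=s)))" using Hp_lb[OF Tdom_upd[OF t]] by simp
  have d1: "1 \<le> fst d + snd d" using d by simp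
  show "Dd d Lh t = fls_deriv (Hp Lx Lh d t) * Dd (1,0) Lh t - Dd (1,0) (Hp Lx Lh d) t * fls_deriv (Lh t)"
    using Dd_from_pd[of d Lh t "PBp (Hp Lx Lh d) Lh t"] Lax_Lh d1 t by (simp add: PBp_def dz_Dd)
  show "Dd d (Orlov snd (0,1) Lh vh) t = fls_deriv (Hp Lx Lh d t) * Dd (1,0) (Orlov snd (0,1) Lh vh) t
      - Dd (1,0) (Hp Lx Lh d) t * fls_deriv (Orlov snd (0,1) Lh vh t)"
  proof -
    have "\<forall>k. pd d (\<lambda>s. Mp Lh vh s $$ k) t = PBp (Hp Lx Lh d) (Mp Lh vh) t $$ k" by (intro allI) (rule Lax_Mh[rule_format, OF d1 t])
    then have "Dd d (Mp Lh vh) t = PBp (Hp Lx Lh d) (Mp Lh vh) t" by (rule Dd_from_pd)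
    then show ?thesis by (simp add: PBp_def dz_Dd Mp_def)
  qed
  show "fls_deriv (Lh t) * Dd (1,0) (Orlov snd (0,1) Lh vh) t - Dd (1,0) Lh t * fls_deriv (Orlov snd (0,1) Lh vh t) = 1"
    using canon_h t by (simp add: PBp_def dz_Dd Mp_def)
qed

lemma dvX: assumes t: "t \<in> Tdom" and d: "2 \<le> fst d + snd d"
  shows "deriv (\<lambda>s. vconv v (j+1) (t(d:=s))) (t d) = (Lx t ^ j * dpx (Hx Lx Lh d t)) $$ 1"
proof (cases "j = 0")
  case True
  then show ?thesis by (simp add: vconv_def dpx_nth)
next
  case False
  interpret X: core fst "(1,0)" Lx v "Hx Lx Lh d" dpx 1 1 t d "fst d" by (rule coreX[OF t d])
  have "1 * X.Bw (j+1) = (Lx t ^ j * dpx (Hx Lx Lh d t)) $$ 1" using X.main False by simp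
  then show ?thesis using False by (simp add: X.Bw_def vconv_def)
qed

lemma dvP: assumes t: "t \<in> Tdom" and d: "2 \<le> fst d + snd d"
  shows "deriv (\<lambda>s. vconv vh (j+1) (t(d:=s))) (t d) = - (Lh t ^ j * fls_deriv (Hp Lx Lh d t)) $$ (-1)"
proof (cases "j = 0")
  case True
  then show ?thesis by (simp add: vconv_def fls_deriv_residue)
next
  case False
  interpret Q: core snd "(0,1)" Lh vh "Hp Lx Lh d" fls_deriv "-1" "-1" t d "snd d" by (rule coreP[OF t d])
  have "-1 * Q.Bw (j+1) = (Lh t ^ j * fls_deriv (Hp Lx Lh d t)) $$ (-1)" using Q.main False by simp
  then have "- (-1 * Q.Bw (j+1)) = - ((Lh t ^ j * fls_deriv (Hp Lx Lh d t)) $$ (-1))" by (rule arg_cong)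
  then have "Q.Bw (j+1) = - (Lh t ^ j * fls_deriv (Hp Lx Lh d t)) $$ (-1)" by simp
  then show ?thesis using False by (simp add: Q.Bw_def vconv_def)
qed

end



lemma sumX: assumes "lb NA A" "lb NG G" "-T \<le> NA" "-T \<le> NG"
  shows "(A * dpx G) $$ 1 = (\<Sum>i\<in>{-T..T}. of_int i * A $$ i * G $$ (-i))"
proof -
  have "(A * dpx G) $$ 1 = (\<Sum>i=NA..1-(NG+1). A $$ i * dpx G $$ (1-i))"
    by (rule times_nth_lb[OF assms(1) lb_dpx[OF assms(2)]])
  also have "\<dots> = (\<Sum>i=NA..-NG. of_int i * A $$ i * G $$ (-i))"
    by (simp add: dpx_nth algebra_simps)
  also have "\<dots> = (\<Sum>i\<in>{-T..T}. of_int i * A $$ i * G $$ (-i))"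
  proof (rule sum.mono_neutral_left)
    show "finite {-T..T}" by simp
    show "{NA..-NG} \<subseteq> {-T..T}" using assms by auto
    show "\<forall>i\<in>{-T..T} - {NA..-NG}. of_int i * A $$ i * G $$ (-i) = 0"
    proof
      fix i assume "i \<in> {-T..T} - {NA..-NG}"
      then have "i < NA \<or> -i < NG" by auto
      then show "of_int i * A $$ i * G $$ (-i) = 0" using assms(1,2) by (auto simp: lb_def)
    qed
  qed
  finally show ?thesis .
qed

lemma sumP: assumes "lb NA A" "lb NG G" "-T \<le> NA" "-T \<le> NG"
  shows "(A * fls_deriv G) $$ (-1) = (\<Sum>i\<in>{-T..T}. - (of_int i * A $$ i * G $$ (-i)))"
proof -
  have "(A * fls_deriv G) $$ (-1) = (\<Sum>i=NA..-1-(NG-1). A $$ i * fls_deriv G $$ (-1-i))"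
    by (rule times_nth_lb[OF assms(1) lb_deriv[OF assms(2)]])
  also have "\<dots> = (\<Sum>i=NA..-NG. - (of_int i * A $$ i * G $$ (-i)))"
    by (simp add: algebra_simps)
  also have "\<dots> = (\<Sum>i\<in>{-T..T}. - (of_int i * A $$ i * G $$ (-i)))"
  proof (rule sum.mono_neutral_left)
    show "finite {-T..T}" by simp
    show "{NA..-NG} \<subseteq> {-T..T}" using assms by auto
    show "\<forall>i\<in>{-T..T} - {NA..-NG}. - (of_int i * A $$ i * G $$ (-i)) = 0"
    proof
      fix i assume "i \<in> {-T..T} - {NA..-NG}"
      then have "i < NA \<or> -i < NG" by auto
      then show "- (of_int i * A $$ i * G $$ (-i)) = 0" using assms(1,2) by (auto simp: lb_def)
    qed
  qed
  finally show ?thesis .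
qed

lemma sum_neg_reindex: "(\<Sum>i\<in>{-T..T::int}. f (-i)) = (\<Sum>i\<in>{-T..T}. f i)"
  by (rule sum.reindex_bij_witness[of _ uminus uminus]) auto

lemma sym_sum:
  fixes A A' B B' :: "int \<Rightarrow> complex"
  assumes Z1: "(\<Sum>i\<in>{-T..T}. of_int i * A' i * A (-i)) = 0"
    and Z2: "(\<Sum>i\<in>{-T..T}. of_int i * B' i * B (-i)) = 0"
  shows "(\<Sum>i\<in>{-T..T}. of_int i * A' i * ((if 0 < i then A (-i) else 0) + (if i \<le> 0 then B i else 0))
           + of_int i * B' i * ((if 0 < -i then A (-(-i)) else 0) + (if -i \<le> 0 then B (-i) else 0)))
       = (\<Sum>i\<in>{-T..T}. of_int i * A i * ((if 0 < i then A' (-i) else 0) + (if i \<le> 0 then B' i else 0))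
           + of_int i * B i * ((if 0 < -i then A' (-(-i)) else 0) + (if -i \<le> 0 then B' (-i) else 0)))"
    (is "(\<Sum>i\<in>_. ?f i) = (\<Sum>i\<in>_. ?g i)")
proof -
  define g1 where "g1 i = of_int i * A i * (if 0 < i then A' (-i) else 0) + of_int i * B i * (if 0 \<le> i then B' (-i) else 0)" for i
  define g2 where "g2 i = of_int i * A i * (if i \<le> 0 then B' i else 0) + of_int i * B i * (if i < 0 then A' i else 0)" for i
  have pw: "?f i = g1 (-i) + g2 i + (of_int i * A' i * A (-i) + of_int i * B' i * B (-i))" for i
  proof -
    consider "i < 0" | "i = 0" | "0 < i" by linarith
    then show ?thesis by cases (simp_all add: g1_def g2_def algebra_simps)
  qed
  have pg: "?g i = g1 i + g2 i" for i
  proof -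
    consider "i < 0" | "i = 0" | "0 < i" by linarith
    then show ?thesis by cases (simp_all add: g1_def g2_def algebra_simps)
  qed
  have "(\<Sum>i\<in>{-T..T}. ?f i) = (\<Sum>i\<in>{-T..T}. g1 (-i)) + (\<Sum>i\<in>{-T..T}. g2 i)
      + ((\<Sum>i\<in>{-T..T}. of_int i * A' i * A (-i)) + (\<Sum>i\<in>{-T..T}. of_int i * B' i * B (-i)))"
    by (simp only: pw sum.distrib)
  also have "\<dots> = (\<Sum>i\<in>{-T..T}. g1 i) + (\<Sum>i\<in>{-T..T}. g2 i)"
    by (simp only: Z1 Z2 sum_neg_reindex) simp
  also have "\<dots> = (\<Sum>i\<in>{-T..T}. ?g i)" by (simp only: pg sum.distrib)
  finally show ?thesis .
qed

context dds begin

lemma diff_vconv: assumes "\<forall>i. pdifferentiable (w i)" "t \<in> Tdom"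
  shows "(\<lambda>s. vconv w j (t(d:=s))) field_differentiable at (t d)"
proof (cases "j = 1")
  case True then show ?thesis by (simp add: vconv_def)
next
  case False then show ?thesis using pdiff[OF assms(1)[rule_format, of j] assms(2)] by (simp add: vconv_def)
qed

lemma pd_omega: assumes t: "t \<in> Tdom" and d: "2 \<le> fst d + snd d"
  and T: "int (fst e + snd e + fst d + snd d) \<le> T"
  shows "pd d (omega v vh e) t = (\<Sum>i\<in>{-T..T}.
      of_int i * (Lx t ^ fst e) $$ i * Hcoef Lx Lh d t i + of_int i * (Lh t ^ snd e) $$ i * Hcoef Lx Lh d t (-i))"
proof -
  have "pd d (omega v vh e) t = deriv (\<lambda>s. vconv v (fst e + 1) (t(d:=s)) + vconv vh (snd e + 1) (t(d:=s))) (t d)"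
    by (simp add: pd_def omega_def)
  also have "\<dots> = deriv (\<lambda>s. vconv v (fst e + 1) (t(d:=s))) (t d) + deriv (\<lambda>s. vconv vh (snd e + 1) (t(d:=s))) (t d)"
    by (rule deriv_add) (intro diff_vconv diff_v diff_vh t)+
  also have "\<dots> = (Lx t ^ fst e * dpx (Hx Lx Lh d t)) $$ 1 - (Lh t ^ snd e * fls_deriv (Hp Lx Lh d t)) $$ (-1)"
    unfolding dvX[OF t d, of "fst e"] dvP[OF t d, of "snd e"] by simp
  also have "(Lx t ^ fst e * dpx (Hx Lx Lh d t)) $$ 1 = (\<Sum>i\<in>{-T..T}. of_int i * (Lx t ^ fst e) $$ i * Hx Lx Lh d t $$ (-i))"
    by (rule sumX[OF lb_power[OF Lx_lb[OF t]] Hx_lb[OF t]]) (use T in auto)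
  also have "(Lh t ^ snd e * fls_deriv (Hp Lx Lh d t)) $$ (-1) = (\<Sum>i\<in>{-T..T}. - (of_int i * (Lh t ^ snd e) $$ i * Hp Lx Lh d t $$ (-i)))"
    by (rule sumP[OF lb_power[OF Lh_lb[OF t]] Hp_lb[OF t]]) (use T in auto)
  finally show ?thesis
    by (simp add: Hx_nth[OF t] Hp_nth[OF t] sum_negf sum.distrib[symmetric] del: Hcoef_def)
qed

lemma final: assumes t: "t \<in> Tdom" and a: "2 \<le> fst a + snd a" and b: "2 \<le> fst b + snd b"
  shows "pd a (omega v vh b) t = pd b (omega v vh a) t"
proof -
  define T where "T = int (fst a + snd a + fst b + snd b)"
  have Z1: "(\<Sum>i\<in>{-T..T}. of_int i * (Lx t ^ fst b) $$ i * (Lx t ^ fst a) $$ (-i)) = 0"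
  proof -
    have "(Lx t ^ fst b * dpx (Lx t ^ fst a)) $$ 1 = (\<Sum>i\<in>{-T..T}. of_int i * (Lx t ^ fst b) $$ i * (Lx t ^ fst a) $$ (-i))"
      by (rule sumX[OF lb_power[OF Lx_lb[OF t]] lb_power[OF Lx_lb[OF t]]]) (auto simp: T_def)
    moreover have "(Lx t ^ fst b * dpx (Lx t ^ fst a)) $$ 1 = 0"
      by (rule R_powpow[OF der_dpx]) (simp add: dpx_nth)
    ultimately show ?thesis by simp
  qed
  have Z2: "(\<Sum>i\<in>{-T..T}. of_int i * (Lh t ^ snd b) $$ i * (Lh t ^ snd a) $$ (-i)) = 0"
  proof -
    have "(Lh t ^ snd b * fls_deriv (Lh t ^ snd a)) $$ (-1) = (\<Sum>i\<in>{-T..T}. - (of_int i * (Lh t ^ snd b) $$ i * (Lh t ^ snd a) $$ (-i)))"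
      by (rule sumP[OF lb_power[OF Lh_lb[OF t]] lb_power[OF Lh_lb[OF t]]]) (auto simp: T_def)
    moreover have "(Lh t ^ snd b * fls_deriv (Lh t ^ snd a)) $$ (-1) = 0"
      by (rule R_powpow[OF der_fls_deriv]) (simp add: fls_deriv_residue)
    ultimately show ?thesis by (simp add: sum_negf)
  qed
  have "pd a (omega v vh b) t = (\<Sum>i\<in>{-T..T}.
      of_int i * (Lx t ^ fst b) $$ i * Hcoef Lx Lh a t i + of_int i * (Lh t ^ snd b) $$ i * Hcoef Lx Lh a t (-i))"
    by (rule pd_omega[OF t a]) (simp add: T_def)
  also have "\<dots> = (\<Sum>i\<in>{-T..T}.
      of_int i * (Lx t ^ fst a) $$ i * Hcoef Lx Lh b t i + of_int i * (Lh t ^ snd a) $$ i * Hcoef Lx Lh b t (-i))"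
    unfolding Hcoef_def
    by (rule sym_sum[where A'="\<lambda>i. (Lx t ^ fst b) $$ i" and A="\<lambda>i. (Lx t ^ fst a) $$ i"
          and B'="\<lambda>i. (Lh t ^ snd b) $$ i" and B="\<lambda>i. (Lh t ^ snd a) $$ i", OF Z1 Z2])
  also have "\<dots> = pd b (omega v vh a) t"
    by (rule pd_omega[OF t b, symmetric]) (simp add: T_def)
  finally show ?thesis .
qed

end

theorem theorem1:
  fixes Lx Lh :: tser and v vh :: "nat \<Rightarrow> times \<Rightarrow> complex"
  assumes L_form: "\<forall>t\<in>Tdom. fls_nth (Lx t) (-1) = 1 \<and> (\<forall>k < -1. fls_nth (Lx t) k = 0)"
    and Lh_form: "\<forall>t\<in>Tdom. fls_nth (Lh t) (-1) \<noteq> 0 \<and> (\<forall>k < -1. fls_nth (Lh t) k = 0)"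
    and diff_L: "\<forall>k. pdifferentiable (\<lambda>t. fls_nth (Lx t) k)"
    and diff_Lh: "\<forall>k. pdifferentiable (\<lambda>t. fls_nth (Lh t) k)"
    and diff_v: "\<forall>i. pdifferentiable (v i)"
    and diff_vh: "\<forall>i. pdifferentiable (vh i)"
    and Lax_L: "\<forall>a t k. 1 \<le> fst a + snd a \<longrightarrow> t \<in> Tdom \<longrightarrow>
                  pd a (\<lambda>s. fls_nth (Lx s) k) t = fls_nth (PBx (Hx Lx Lh a) Lx t) k"
    and Lax_M: "\<forall>a t k. 1 \<le> fst a + snd a \<longrightarrow> t \<in> Tdom \<longrightarrow>
                  pd a (\<lambda>s. fls_nth (Mx Lx v s) k) t = fls_nth (PBx (Hx Lx Lh a) (Mx Lx v) t) k"
    and Lax_Lh: "\<forall>a t k. 1 \<le> fst a + snd a \<longrightarrow> t \<in> Tdom \<longrightarrow>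
                  pd a (\<lambda>s. fls_nth (Lh s) k) t = fls_nth (PBp (Hp Lx Lh a) Lh t) k"
    and Lax_Mh: "\<forall>a t k. 1 \<le> fst a + snd a \<longrightarrow> t \<in> Tdom \<longrightarrow>
                  pd a (\<lambda>s. fls_nth (Mp Lh vh s) k) t = fls_nth (PBp (Hp Lx Lh a) (Mp Lh vh) t) k"
    and canon: "\<forall>t\<in>Tdom. PBx Lx (Mx Lx v) t = 1"
    and canon_h: "\<forall>t\<in>Tdom. PBp Lh (Mp Lh vh) t = 1"
  shows "\<forall>a b t. 2 \<le> fst a + snd a \<longrightarrow> 2 \<le> fst b + snd b \<longrightarrow> t \<in> Tdom \<longrightarrow>
           pd a (omega v vh b) t = pd b (omega v vh a) t"
proof -
  interpret dds Lx Lh v vh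
    by (rule dds.intro) (fact assms)+
  show ?thesis using final by blast
qed

end
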